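(* For any integer $n \ge 104$, any $L,\mu,\nu>0$ with $\kappa := L/\mu \ge 8n$, and any integer $K \ge \max\left\{\frac{\kappa^2}{n}, \kappa^{3/2}n^{1/2}\right\}$, there exist a $4$-dimensional function $F \in \mathcal{F}_{\text{PŁ}}\left(L,\mu,\frac{L}{\mu},\nu\right)$ (with $n$ components) and an initialization point $\mathbf{x}_0$ such that for any permutation-based SGD (i.e. any choice of permutations $\sigma_1,\dots,\sigma_K$) with any constant step size $\eta > 0$ started at $\mathbf{x}_0^1 = \mathbf{x}_0$, and any nonnegative weights $\alpha_1,\dots,\alpha_{K+1}$ (not all zero), the weighted average iterate $\hat{\mathbf{x}} = \frac{\sum_{k=1}^{K+1}\alpha_k\mathbf{x}_0^k}{\sum_{k=1}^{K+1}\alpha_k}$ satisfies $$F(\hat{\mathbf{x}}) - F^* = \Omega\left(\frac{L^2\nu^2}{\mu^3n^2K^2}\right).$$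
   Context: Finite-sum problem: $F(\mathbf{x}) = \frac1n\sum_{i=1}^n f_i(\mathbf{x})$ on $\mathbb{R}^d$, $F^* = \inf F > -\infty$. A differentiable $f$ satisfies the $\mu$-PŁ condition if $\frac12\|\nabla f(\mathbf{x})\|^2 \ge \mu(f(\mathbf{x}) - \inf f)$ for all $\mathbf{x}$. $\mathcal{F}_{\text{PŁ}}(L,\mu,\tau,\nu)$: all such $F$ with each $f_i$ $L$-smooth (i.e. $\|\nabla f_i(\mathbf{x})-\nabla f_i(\mathbf{y})\|\le L\|\mathbf{x}-\mathbf{y}\|$; convexity of $f_i$ is not required), $F$ satisfying the $\mu$-PŁ condition, and $\|\nabla f_i(\mathbf{x}) - \nabla F(\mathbf{x})\| \le \tau\|\nabla F(\mathbf{x})\| + \nu$ for all $i,\mathbf{x}$. Permutation-based SGD with constant step size $\eta$: at each epoch $k=1,\dots,K$ a permutation $\sigma_k$ of $[n]$ is chosen by an arbitrary rule, $\mathbf{x}_i^k = \mathbf{x}_{i-1}^k - \eta\nabla f_{\sigma_k(i)}(\mathbf{x}_{i-1}^k)$ for $i=1,\dots,n$, $\mathbf{x}_0^{k+1} = \mathbf{x}_n^k$. $\Omega(g)$ means at least a universal positive constant times $g$. *)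

theory Defs
  imports "HOL-Analysis.Analysis"
begin

text \<open>Component functions are indexed by 0..n-1; dimension 4 is the type real^4.\<close>

definition is_gradient :: "('a::real_inner \<Rightarrow> real) \<Rightarrow> ('a \<Rightarrow> 'a) \<Rightarrow> bool" where
  "is_gradient f g \<longleftrightarrow> (\<forall>x. (f has_derivative (\<lambda>h. g x \<bullet> h)) (at x))"

definition avg_fun :: "nat \<Rightarrow> (nat \<Rightarrow> 'a \<Rightarrow> real) \<Rightarrow> 'a \<Rightarrow> real" where
  "avg_fun n f x = (\<Sum>i<n. f i x) / real n"

definition avg_grad :: "nat \<Rightarrow> (nat \<Rightarrow> 'a \<Rightarrow> 'a::real_vector) \<Rightarrow> 'a \<Rightarrow> 'a" where
  "avg_grad n g x = (1 / real n) *\<^sub>R (\<Sum>i<n. g i x)"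

definition in_PL_class ::
  "nat \<Rightarrow> (nat \<Rightarrow> 'a::real_inner \<Rightarrow> real) \<Rightarrow> (nat \<Rightarrow> 'a \<Rightarrow> 'a) \<Rightarrow> real \<Rightarrow> real \<Rightarrow> real \<Rightarrow> real \<Rightarrow> bool" where
  "in_PL_class n f g L \<mu> \<tau> \<nu> \<longleftrightarrow>
     (\<forall>i<n. is_gradient (f i) (g i)) \<and>
     (\<forall>i<n. \<forall>x y. norm (g i x - g i y) \<le> L * norm (x - y)) \<and>
     bdd_below (range (avg_fun n f)) \<and>
     (\<forall>x. (1/2) * (norm (avg_grad n g x))\<^sup>2 \<ge> \<mu> * (avg_fun n f x - (INF y. avg_fun n f y))) \<and>
     (\<forall>i<n. \<forall>x. norm (g i x - avg_grad n g x) \<le> \<tau> * norm (avg_grad n g x) + \<nu>)"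

definition sgd_epoch :: "nat \<Rightarrow> (nat \<Rightarrow> 'a \<Rightarrow> 'a::real_vector) \<Rightarrow> real \<Rightarrow> (nat \<Rightarrow> nat) \<Rightarrow> 'a \<Rightarrow> 'a" where
  "sgd_epoch n g \<eta> p x = foldl (\<lambda>y i. y - \<eta> *\<^sub>R g (p i) y) x [0..<n]"

text \<open>sgd_start n g eta sigma x0 k = x_0^{k+1}, the start of epoch k+1 (epochs numbered from 1).\<close>
fun sgd_start :: "nat \<Rightarrow> (nat \<Rightarrow> 'a \<Rightarrow> 'a::real_vector) \<Rightarrow> real \<Rightarrow> (nat \<Rightarrow> nat \<Rightarrow> nat) \<Rightarrow> 'a \<Rightarrow> nat \<Rightarrow> 'a" where
  "sgd_start n g \<eta> \<sigma> x0 0 = x0"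
| "sgd_start n g \<eta> \<sigma> x0 (Suc k) = sgd_epoch n g \<eta> (\<sigma> (Suc k)) (sgd_start n g \<eta> \<sigma> x0 k)"

end

theory Submission
  imports Defs
begin

definition qf :: "(nat \<Rightarrow> 'n::finite \<Rightarrow> real) \<Rightarrow> (nat \<Rightarrow> 'n \<Rightarrow> real) \<Rightarrow> nat \<Rightarrow> real^'n \<Rightarrow> real" where
  "qf a b i x = (\<Sum>j\<in>UNIV. a i j / 2 * (x$j)^2 + b i j * x$j)"

definition qg :: "(nat \<Rightarrow> 'n::finite \<Rightarrow> real) \<Rightarrow> (nat \<Rightarrow> 'n \<Rightarrow> real) \<Rightarrow> nat \<Rightarrow> real^'n \<Rightarrow> real^'n" where
  "qg a b i x = (\<chi> j. a i j * x$j + b i j)"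

lemma qf_grad:
  fixes a b :: "nat \<Rightarrow> 'n::finite \<Rightarrow> real"
  shows "is_gradient (qf a b i) (qg a b i)"
  unfolding is_gradient_def
proof
  fix x :: "real^'n"
  have "((\<lambda>x. \<Sum>j\<in>UNIV. a i j / 2 * (x$j)^2 + b i j * x$j) has_derivative
        (\<lambda>h. \<Sum>j\<in>UNIV. a i j / 2 * (2 * x$j * h$j) + b i j * h$j)) (at x)"
    by (intro has_derivative_sum derivative_eq_intros) (auto intro: bounded_linear_imp_has_derivative[OF bounded_linear_vec_nth])
  moreover have "(\<lambda>h. \<Sum>j\<in>UNIV. a i j / 2 * (2 * x$j * h$j) + b i j * h$j) = (\<lambda>h. qg a b i x \<bullet> h)"
    by (auto simp: qg_def inner_vec_def algebra_simps intro!: sum.cong)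
  ultimately show "(qf a b i has_derivative (\<lambda>h. qg a b i x \<bullet> h)) (at x)"
    unfolding qf_def[abs_def] by simp
qed

lemma norm_scale_cw:
  fixes v w :: "real^'n::finite"
  assumes "\<And>j. \<bar>v$j\<bar> \<le> c * \<bar>w$j\<bar>" "c \<ge> 0"
  shows "norm v \<le> c * norm w"
proof -
  have "norm v \<le> norm (c *\<^sub>R w)"
    by (rule norm_le_componentwise_cart) (use assms in \<open>auto simp: abs_mult\<close>)
  then show ?thesis using assms by simp
qed

definition abar :: "nat \<Rightarrow> (nat \<Rightarrow> 'n \<Rightarrow> real) \<Rightarrow> 'n \<Rightarrow> real" where
  "abar n a j = (\<Sum>i<n. a i j) / real n"

lemma avg_fun_qf:
  fixes a b :: "nat \<Rightarrow> 'n::finite \<Rightarrow> real"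
  assumes "n > 0" "\<And>j. (\<Sum>i<n. b i j) = 0"
  shows "avg_fun n (qf a b) x = (\<Sum>j\<in>UNIV. abar n a j / 2 * (x$j)^2)"
proof -
  have "(\<Sum>i<n. qf a b i x) = (\<Sum>j\<in>UNIV. \<Sum>i<n. a i j / 2 * (x$j)^2 + b i j * x$j)"
    unfolding qf_def by (rule sum.swap)
  also have "\<dots> = (\<Sum>j\<in>UNIV. (\<Sum>i<n. a i j) / 2 * (x$j)^2 + (\<Sum>i<n. b i j) * x$j)"
    by (simp add: sum.distrib sum_distrib_right sum_divide_distrib)
  also have "\<dots> = (\<Sum>j\<in>UNIV. (\<Sum>i<n. a i j) / 2 * (x$j)^2)"
    using assms by simp
  finally have "avg_fun n (qf a b) x = (\<Sum>j\<in>UNIV. (\<Sum>i<n. a i j) / 2 * (x$j)^2) / real n"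
    unfolding avg_fun_def by simp
  also have "\<dots> = (\<Sum>j\<in>UNIV. (\<Sum>i<n. a i j) / 2 * (x$j)^2 / real n)"
    by (rule sum_divide_distrib)
  finally show ?thesis unfolding abar_def by (simp add: field_simps)
qed

lemma avg_grad_qg:
  fixes a b :: "nat \<Rightarrow> 'n::finite \<Rightarrow> real"
  assumes "n > 0" "\<And>j. (\<Sum>i<n. b i j) = 0"
  shows "avg_grad n (qg a b) x = (\<chi> j. abar n a j * x$j)"
proof -
  have "(\<Sum>i<n. qg a b i x) $ j = (\<Sum>i<n. a i j) * x$j" for j
    using assms(2)[of j] by (simp add: qg_def sum.distrib sum_distrib_right)
  then show ?thesis
    unfolding avg_grad_def abar_def by (simp add: vec_eq_iff)
qed

lemma in_PL_qf:
  fixes a b :: "nat \<Rightarrow> 'n::finite \<Rightarrow> real"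
  assumes n: "n > 0" and bsum: "\<And>j. (\<Sum>i<n. b i j) = 0"
    and \<mu>: "\<mu> > 0"
    and aL: "\<And>i j. i < n \<Longrightarrow> \<bar>a i j\<bar> \<le> L"
    and amu: "\<And>j. abar n a j \<ge> \<mu>"
    and adev: "\<And>i j. i < n \<Longrightarrow> \<bar>a i j - abar n a j\<bar> \<le> L"
    and bnu: "\<And>i. i < n \<Longrightarrow> norm (\<chi> j. b i j) \<le> \<nu>"
  shows "in_PL_class n (qf a b) (qg a b) L \<mu> (L / \<mu>) \<nu>"
proof -
  have L0: "L \<ge> 0" using aL[of 0] n by fastforce
  have AF: "avg_fun n (qf a b) x = (\<Sum>j\<in>UNIV. abar n a j / 2 * (x$j)^2)" for x
    using avg_fun_qf[of n b a x] n bsum by blast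
  have AG: "avg_grad n (qg a b) x = (\<chi> j. abar n a j * x$j)" for x
    using avg_grad_qg[of n b a x] n bsum by blast
  have nonneg: "avg_fun n (qf a b) x \<ge> 0" for x
    unfolding AF using amu \<mu> by (intro sum_nonneg) (simp add: less_le_trans[OF \<mu>] order.strict_implies_order[OF less_le_trans[OF \<mu>]])
  have zero: "avg_fun n (qf a b) 0 = 0" unfolding AF by simp
  have INF0: "(INF y. avg_fun n (qf a b) y) = 0"
  proof (rule antisym)
    show "(INF y. avg_fun n (qf a b) y) \<le> 0"
      using zero by (metis (mono_tags, lifting) bdd_belowI2 cINF_lower iso_tuple_UNIV_I nonneg)
    show "0 \<le> (INF y. avg_fun n (qf a b) y)"
      by (rule cINF_greatest) (auto simp: nonneg)
  qed
  have bdd: "bdd_below (range (avg_fun n (qf a b)))"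
    by (rule bdd_belowI2[of _ 0]) (simp add: nonneg)
  have PL: "(1/2) * (norm (avg_grad n (qg a b) x))\<^sup>2 \<ge> \<mu> * (avg_fun n (qf a b) x - (INF y. avg_fun n (qf a b) y))" for x
  proof -
    have "(norm (avg_grad n (qg a b) x))\<^sup>2 = (\<Sum>j\<in>UNIV. (abar n a j * x$j)^2)"
      unfolding AG by (simp add: norm_vec_def L2_set_def sum_nonneg)
    moreover have "\<mu> * (abar n a j / 2 * (x$j)^2) \<le> (1/2) * (abar n a j * x$j)^2" for j
    proof -
      have "\<mu> * abar n a j \<le> abar n a j * abar n a j" using amu[of j] \<mu> by (intro mult_right_mono) auto
      then have "\<mu> * abar n a j * (x$j)^2 \<le> abar n a j * abar n a j * (x$j)^2" by (rule mult_right_mono) auto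
      then show ?thesis by (simp add: power2_eq_square algebra_simps)
    qed
    ultimately show ?thesis unfolding INF0 unfolding AF
      by (simp add: sum_distrib_left sum_divide_distrib[symmetric] sum_mono)
  qed
  have dev: "norm (qg a b i x - avg_grad n (qg a b) x) \<le> L / \<mu> * norm (avg_grad n (qg a b) x) + \<nu>"
    if i: "i < n" for i x
  proof -
    have eq: "qg a b i x - avg_grad n (qg a b) x = (\<chi> j. (a i j - abar n a j) * x$j) + (\<chi> j. b i j)"
      unfolding AG qg_def by (simp add: vec_eq_iff algebra_simps)
    have "norm (\<chi> j. (a i j - abar n a j) * x$j) \<le> L / \<mu> * norm (\<chi> j. abar n a j * x$j)"
    proof (rule norm_scale_cw)
      fix j
      have "\<bar>(a i j - abar n a j) * x$j\<bar> \<le> L * \<bar>x$j\<bar>"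
        using adev[OF i, of j] by (simp add: abs_mult mult_right_mono)
      also have "\<dots> \<le> L / \<mu> * (abar n a j * \<bar>x$j\<bar>)"
      proof -
        have "L * 1 \<le> L * (abar n a j / \<mu>)" using amu[of j] \<mu> L0 by (intro mult_left_mono) auto
        then have "L * \<bar>x$j\<bar> \<le> L * (abar n a j / \<mu>) * \<bar>x$j\<bar>" by (intro mult_right_mono) auto
        then show ?thesis by (simp add: field_simps)
      qed
      also have "\<dots> = L / \<mu> * \<bar>(\<chi> j. abar n a j * x$j) $ j\<bar>"
        using amu[of j] \<mu> by (simp add: abs_mult)
      finally show "\<bar>(\<chi> j. (a i j - abar n a j) * x$j) $ j\<bar> \<le> L / \<mu> * \<bar>(\<chi> j. abar n a j * x$j) $ j\<bar>" by simp
    next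
      show "L / \<mu> \<ge> 0" using L0 \<mu> by simp
    qed
    then show ?thesis unfolding eq unfolding AG
      using norm_triangle_ineq[of "(\<chi> j. (a i j - abar n a j) * x$j)" "(\<chi> j. b i j)"] bnu[OF i] by linarith
  qed
  have lip: "norm (qg a b i x - qg a b i y) \<le> L * norm (x - y)" if i: "i < n" for i x y
  proof (rule norm_scale_cw)
    fix j show "\<bar>(qg a b i x - qg a b i y) $ j\<bar> \<le> L * \<bar>(x - y) $ j\<bar>"
    proof -
      have "\<bar>(qg a b i x - qg a b i y) $ j\<bar> = \<bar>a i j\<bar> * \<bar>(x - y) $ j\<bar>"
        by (simp add: qg_def abs_mult flip: right_diff_distrib)
      also have "\<dots> \<le> L * \<bar>(x - y) $ j\<bar>" using aL[OF i, of j] by (rule mult_right_mono) simp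
      finally show ?thesis .
    qed
  qed (rule L0)
  show ?thesis
    unfolding in_PL_class_def using qf_grad lip bdd PL dev by blast
qed

lemma epoch_coord_gen:
  "(foldl (\<lambda>y i. y - \<eta> *\<^sub>R qg a b (p i) y) x xs) $ j
     = foldl (\<lambda>t i. t - \<eta> * (a (p i) j * t + b (p i) j)) (x $ j) xs"
  by (induction xs arbitrary: x) (simp_all add: qg_def)

lemma epoch_coord:
  "(sgd_epoch n (qg a b) \<eta> p x) $ j
     = foldl (\<lambda>t i. t - \<eta> * (a i j * t + b i j)) (x $ j) (map p [0..<n])"
  unfolding sgd_epoch_def epoch_coord_gen foldl_map ..

lemma foldl_linear:
  fixes c :: "nat \<Rightarrow> real"
  shows "foldl (\<lambda>t i. t - \<eta> * (c i * t + 0)) t xs = prod_list (map (\<lambda>i. 1 - \<eta> * c i) xs) * t"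
  by (induction xs arbitrary: t) (simp_all add: ring_distribs mult_ac)

lemma prod_list_if:
  "prod_list (map (\<lambda>i. if P i then q else 1) xs) = q ^ length (filter P xs)"
  by (induction xs) auto

lemma prod_list_const:
  "prod_list (map (\<lambda>i. q) xs) = q ^ length xs"
  by (induction xs) auto

definition Um :: "real \<Rightarrow> real \<Rightarrow> real \<Rightarrow> real \<Rightarrow> real" where
  "Um \<eta> r \<nu> t = t - \<eta> * (r * t + - \<nu>)"
definition Zm :: "real \<Rightarrow> real \<Rightarrow> real \<Rightarrow> real" where
  "Zm \<eta> z t = t - \<eta> * (z * t + 0)"
definition Dm :: "real \<Rightarrow> real \<Rightarrow> real \<Rightarrow> real \<Rightarrow> real" where
  "Dm \<eta> r \<nu> t = t - \<eta> * (- r * t + \<nu>)"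

definition Wf :: "real \<Rightarrow> real \<Rightarrow> real \<Rightarrow> real \<Rightarrow> nat \<Rightarrow> nat \<Rightarrow> nat \<Rightarrow> real \<Rightarrow> real" where
  "Wf \<eta> r z \<nu> i w j t = (Dm \<eta> r \<nu> ^^ j) ((Zm \<eta> z ^^ w) ((Um \<eta> r \<nu> ^^ i) t))"

lemma mono_funpow_real:
  fixes f :: "real \<Rightarrow> real"
  assumes "\<And>x y. x \<le> y \<Longrightarrow> f x \<le> f y"
  shows "x \<le> y \<Longrightarrow> (f ^^ k) x \<le> (f ^^ k) y"
  by (induction k) (auto intro: assms)

locale uzd =
  fixes \<eta> r z \<nu> :: real
  assumes eta: "\<eta> \<ge> 0" and nu: "\<nu> \<ge> 0" and r: "r \<ge> 0" and er: "\<eta> * r \<le> 1"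
    and z0: "\<eta> * z \<ge> 0" and z1: "\<eta> * z \<le> 1"
begin

lemma U_mono: "x \<le> y \<Longrightarrow> Um \<eta> r \<nu> x \<le> Um \<eta> r \<nu> y"
proof -
  assume "x \<le> y"
  then have "(1 - \<eta> * r) * x \<le> (1 - \<eta> * r) * y" using er by (intro mult_left_mono) auto
  then show ?thesis by (simp add: Um_def algebra_simps)
qed

lemma Z_mono: "x \<le> y \<Longrightarrow> Zm \<eta> z x \<le> Zm \<eta> z y"
proof -
  assume "x \<le> y"
  then have "(1 - \<eta> * z) * x \<le> (1 - \<eta> * z) * y" using z1 by (intro mult_left_mono) auto
  then show ?thesis by (simp add: Zm_def algebra_simps)
qed

lemma D_mono: "x \<le> y \<Longrightarrow> Dm \<eta> r \<nu> x \<le> Dm \<eta> r \<nu> y"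
proof -
  assume "x \<le> y"
  then have "(1 + \<eta> * r) * x \<le> (1 + \<eta> * r) * y" using eta r by (intro mult_left_mono) auto
  then show ?thesis by (simp add: Dm_def algebra_simps)
qed

lemma UZ: "Zm \<eta> z (Um \<eta> r \<nu> y) \<le> Um \<eta> r \<nu> (Zm \<eta> z y)"
proof -
  have "(1 - \<eta> * z) * (\<eta> * \<nu>) \<le> \<eta> * \<nu>" using mult_nonneg_nonneg[OF mult_nonneg_nonneg[OF eta nu] z0] by (simp add: algebra_simps)
  then show ?thesis by (simp add: Um_def Zm_def algebra_simps)
qed

lemma UZ_pow: "Zm \<eta> z ((Um \<eta> r \<nu> ^^ i) y) \<le> (Um \<eta> r \<nu> ^^ i) (Zm \<eta> z y)"
proof (induction i)
  case (Suc i)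
  have "Zm \<eta> z ((Um \<eta> r \<nu> ^^ Suc i) y) = Zm \<eta> z (Um \<eta> r \<nu> ((Um \<eta> r \<nu> ^^ i) y))" by simp
  also have "\<dots> \<le> Um \<eta> r \<nu> (Zm \<eta> z ((Um \<eta> r \<nu> ^^ i) y))" by (rule UZ)
  also have "\<dots> \<le> Um \<eta> r \<nu> ((Um \<eta> r \<nu> ^^ i) (Zm \<eta> z y))" by (rule U_mono[OF Suc.IH])
  finally show ?case by simp
qed simp

lemma ZD: "Dm \<eta> r \<nu> (Zm \<eta> z y) \<le> Zm \<eta> z (Dm \<eta> r \<nu> y)"
proof -
  have "(1 - \<eta> * z) * (\<eta> * \<nu>) \<le> \<eta> * \<nu>" using mult_nonneg_nonneg[OF mult_nonneg_nonneg[OF eta nu] z0] by (simp add: algebra_simps)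
  then show ?thesis by (simp add: Dm_def Zm_def algebra_simps)
qed

lemma ZD_pow: "Dm \<eta> r \<nu> ((Zm \<eta> z ^^ i) y) \<le> (Zm \<eta> z ^^ i) (Dm \<eta> r \<nu> y)"
proof (induction i)
  case (Suc i)
  have "Dm \<eta> r \<nu> ((Zm \<eta> z ^^ Suc i) y) = Dm \<eta> r \<nu> (Zm \<eta> z ((Zm \<eta> z ^^ i) y))" by simp
  also have "\<dots> \<le> Zm \<eta> z (Dm \<eta> r \<nu> ((Zm \<eta> z ^^ i) y))" by (rule ZD)
  also have "\<dots> \<le> Zm \<eta> z ((Zm \<eta> z ^^ i) (Dm \<eta> r \<nu> y))" by (rule Z_mono[OF Suc.IH])
  finally show ?case by simp
qed simp

lemma UD: "Um \<eta> r \<nu> (Dm \<eta> r \<nu> y) = Dm \<eta> r \<nu> (Um \<eta> r \<nu> y)"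
  by (simp add: Um_def Dm_def algebra_simps)

lemma UD_pow: "(Um \<eta> r \<nu> ^^ i) (Dm \<eta> r \<nu> y) = Dm \<eta> r \<nu> ((Um \<eta> r \<nu> ^^ i) y)"
  by (induction i) (simp_all add: UD)

lemma W_mono: "x \<le> y \<Longrightarrow> Wf \<eta> r z \<nu> i w j x \<le> Wf \<eta> r z \<nu> i w j y"
  unfolding Wf_def
  by (intro mono_funpow_real[where f="Dm \<eta> r \<nu>"] mono_funpow_real[where f="Zm \<eta> z"]
      mono_funpow_real[where f="Um \<eta> r \<nu>"] D_mono Z_mono U_mono)

lemma W_U: "Wf \<eta> r z \<nu> i w j (Um \<eta> r \<nu> t) = Wf \<eta> r z \<nu> (Suc i) w j t"
  unfolding Wf_def by (simp add: funpow_Suc_right del: funpow.simps)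

lemma W_Z: "Wf \<eta> r z \<nu> (Suc 0 * 0 + i) (Suc w) j t \<le> Wf \<eta> r z \<nu> i w j (Zm \<eta> z t)"
proof -
  have "(Zm \<eta> z ^^ Suc w) ((Um \<eta> r \<nu> ^^ i) t) = (Zm \<eta> z ^^ w) (Zm \<eta> z ((Um \<eta> r \<nu> ^^ i) t))"
    by (simp add: funpow_Suc_right del: funpow.simps)
  also have "\<dots> \<le> (Zm \<eta> z ^^ w) ((Um \<eta> r \<nu> ^^ i) (Zm \<eta> z t))"
    by (intro mono_funpow_real[where f="Zm \<eta> z"] Z_mono UZ_pow)
  finally show ?thesis unfolding Wf_def
    by (auto intro: mono_funpow_real[where f="Dm \<eta> r \<nu>"] D_mono)
qed

lemma W_D: "Wf \<eta> r z \<nu> i w (Suc j) t \<le> Wf \<eta> r z \<nu> i w j (Dm \<eta> r \<nu> t)"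
proof -
  have "(Dm \<eta> r \<nu> ^^ Suc j) ((Zm \<eta> z ^^ w) ((Um \<eta> r \<nu> ^^ i) t))
      = (Dm \<eta> r \<nu> ^^ j) (Dm \<eta> r \<nu> ((Zm \<eta> z ^^ w) ((Um \<eta> r \<nu> ^^ i) t)))"
    by (simp add: funpow_Suc_right del: funpow.simps)
  also have "\<dots> \<le> (Dm \<eta> r \<nu> ^^ j) ((Zm \<eta> z ^^ w) (Dm \<eta> r \<nu> ((Um \<eta> r \<nu> ^^ i) t)))"
    by (intro mono_funpow_real[where f="Dm \<eta> r \<nu>"] D_mono ZD_pow)
  also have "\<dots> = (Dm \<eta> r \<nu> ^^ j) ((Zm \<eta> z ^^ w) ((Um \<eta> r \<nu> ^^ i) (Dm \<eta> r \<nu> t)))"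
    by (simp add: UD_pow)
  finally show ?thesis unfolding Wf_def .
qed

lemma foldl_W:
  fixes ca cb :: "nat \<Rightarrow> real" and ty :: "nat \<Rightarrow> nat"
  assumes "\<forall>i\<in>set xs. (ty i = 0 \<and> ca i = r \<and> cb i = - \<nu>) \<or> (ty i = 1 \<and> ca i = z \<and> cb i = 0)
                        \<or> (ty i = 2 \<and> ca i = - r \<and> cb i = \<nu>)"
  shows "Wf \<eta> r z \<nu> (length (filter (\<lambda>i. ty i = 0) xs)) (length (filter (\<lambda>i. ty i = 1) xs))
            (length (filter (\<lambda>i. ty i = 2) xs)) t
         \<le> foldl (\<lambda>t i. t - \<eta> * (ca i * t + cb i)) t xs"
  using assms
proof (induction xs arbitrary: t)
  case Nil
  then show ?case by (simp add: Wf_def)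
next
  case (Cons a xs)
  let ?c = "\<lambda>k. length (filter (\<lambda>i. ty i = k) xs)"
  have IH: "Wf \<eta> r z \<nu> (?c 0) (?c 1) (?c 2) s \<le> foldl (\<lambda>t i. t - \<eta> * (ca i * t + cb i)) s xs" for s
    using Cons by auto
  have st: "foldl (\<lambda>t i. t - \<eta> * (ca i * t + cb i)) t (a # xs)
       = foldl (\<lambda>t i. t - \<eta> * (ca i * t + cb i)) (t - \<eta> * (ca a * t + cb a)) xs" by simp
  from Cons.prems consider "ty a = 0" "ca a = r" "cb a = - \<nu>" | "ty a = 1" "ca a = z" "cb a = 0"
    | "ty a = 2" "ca a = - r" "cb a = \<nu>" by auto
  then show ?case
  proof cases
    case 1
    then have "t - \<eta> * (ca a * t + cb a) = Um \<eta> r \<nu> t" by (simp add: Um_def)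
    then show ?thesis using IH[of "Um \<eta> r \<nu> t"] 1 by (simp add: W_U)
  next
    case 2
    then have "t - \<eta> * (ca a * t + cb a) = Zm \<eta> z t" by (simp add: Zm_def)
    then show ?thesis using IH[of "Zm \<eta> z t"] 2 W_Z[of "?c 0" "?c 1" "?c 2" t] by simp
  next
    case 3
    then have "t - \<eta> * (ca a * t + cb a) = Dm \<eta> r \<nu> t" by (simp add: Dm_def)
    then show ?thesis using IH[of "Dm \<eta> r \<nu> t"] 3 W_D[of "?c 0" "?c 1" "?c 2" t] by simp
  qed
qed

end

lemma pow_upper2:
  fixes x :: real
  assumes "0 \<le> x" "x \<le> 1"
  shows "(1 - x)^m \<le> 1 - real m * x + (real m * x)^2 / 2"
proof (induction m)
  case 0 then show ?case by simp
next
  case (Suc m)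
  have "(1 - x)^Suc m = (1 - x) * (1 - x)^m" by simp
  also have "\<dots> \<le> (1 - x) * (1 - real m * x + (real m * x)^2 / 2)"
    using Suc assms by (intro mult_left_mono) auto
  also have "\<dots> = 1 - real (Suc m) * x + (real (Suc m) * x)^2 / 2 - (x^2 / 2 + (real m * x)^2 * x / 2)"
    by (simp add: field_simps power2_eq_square)
  also have "\<dots> \<le> 1 - real (Suc m) * x + (real (Suc m) * x)^2 / 2"
  proof -
    have "0 \<le> (real m * x)^2 * x" "0 \<le> x^2" using assms by simp_all
    then show ?thesis by linarith
  qed
  finally show ?case .
qed

lemma pow_upper_plus:
  fixes a :: real
  assumes "0 \<le> a" "real m * a \<le> 1"
  shows "(1 + a)^m \<le> 1 + real m * a + (real m * a)^2"
  using assms(2)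
proof (induction m)
  case 0 then show ?case by simp
next
  case (Suc m)
  have ma: "real m * a \<le> 1" using Suc.prems assms(1) by (simp add: algebra_simps)
  have "(1 + a)^Suc m = (1 + a) * (1 + a)^m" by simp
  also have "\<dots> \<le> (1 + a) * (1 + real m * a + (real m * a)^2)"
    using Suc.IH[OF ma] assms(1) by (intro mult_left_mono) auto
  also have "\<dots> = 1 + real (Suc m) * a + (real (Suc m) * a)^2 - a^2 * ((real m + 1) - real m * (real m * a))"
    by (simp add: algebra_simps power2_eq_square)
  also have "\<dots> \<le> 1 + real (Suc m) * a + (real (Suc m) * a)^2"
  proof -
    have "real m * (real m * a) \<le> real m * 1" using ma by (intro mult_left_mono) auto
    then have "0 \<le> (real m + 1) - real m * (real m * a)" by simp
    then show ?thesis by simp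
  qed
  finally show ?case .
qed

lemma U_pow_closed: "r \<noteq> 0 \<Longrightarrow> (Um \<eta> r \<nu> ^^ i) t = \<nu>/r + (1 - \<eta>*r)^i * (t - \<nu>/r)"
proof (induction i)
  case (Suc i)
  have "(Um \<eta> r \<nu> ^^ Suc i) t = Um \<eta> r \<nu> (\<nu>/r + (1 - \<eta>*r)^i * (t - \<nu>/r))" using Suc by simp
  also have "\<dots> = \<nu>/r + (1 - \<eta>*r)^Suc i * (t - \<nu>/r)" using Suc.prems by (simp add: Um_def field_simps)
  finally show ?case .
qed simp

lemma D_pow_closed: "r \<noteq> 0 \<Longrightarrow> (Dm \<eta> r \<nu> ^^ i) t = \<nu>/r + (1 + \<eta>*r)^i * (t - \<nu>/r)"
proof (induction i)
  case (Suc i)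
  have "(Dm \<eta> r \<nu> ^^ Suc i) t = Dm \<eta> r \<nu> (\<nu>/r + (1 + \<eta>*r)^i * (t - \<nu>/r))" using Suc by simp
  also have "\<dots> = \<nu>/r + (1 + \<eta>*r)^Suc i * (t - \<nu>/r)" using Suc.prems by (simp add: Dm_def field_simps)
  finally show ?case .
qed simp

lemma Z_pow_closed: "(Zm \<eta> z ^^ i) t = (1 - \<eta>*z)^i * t"
  by (induction i) (simp_all add: Zm_def field_simps)

lemma W_ge:
  assumes r: "r > 0"
    and cond: "(\<nu>/r) * ((1 - (1-\<eta>*r)^m * (1+\<eta>*r)^m) - (1 - (1-\<eta>*z)^k) * ((1+\<eta>*r)^m - (1-\<eta>*r)^m * (1+\<eta>*r)^m))
               \<ge> l * (1 - (1-\<eta>*z)^k * ((1-\<eta>*r)^m * (1+\<eta>*r)^m))"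
  shows "Wf \<eta> r z \<nu> m k m l \<ge> l"
proof -
  define X where "X = (1-\<eta>*r)^m"
  define Y where "Y = (1+\<eta>*r)^m"
  define Q where "Q = (1-\<eta>*z)^k"
  define c where "c = \<nu>/r"
  have W: "Wf \<eta> r z \<nu> m k m l = c + Y * (Q * (c + X * (l - c)) - c)"
    unfolding Wf_def using r by (simp add: U_pow_closed D_pow_closed Z_pow_closed X_def Y_def Q_def c_def)
  have "Wf \<eta> r z \<nu> m k m l - l = c * ((1 - X*Y) - (1 - Q) * (Y - X*Y)) - l * (1 - Q * (X * Y))"
    unfolding W by (simp add: algebra_simps)
  moreover have "c * ((1 - X*Y) - (1 - Q) * (Y - X*Y)) - l * (1 - Q * (X * Y)) \<ge> 0"
    using cond unfolding X_def Y_def Q_def c_def by simp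
  ultimately show ?thesis by simp
qed

lemma R2_cond:
  fixes m kz n :: nat and \<mu> L \<nu> K \<eta> :: real
  assumes m1: "m \<ge> 1" and kz: "kz \<ge> 1" and mn: "2 * real m \<le> real n"
    and \<mu>: "\<mu> > 0" and \<nu>: "\<nu> > 0" and Lb: "L \<ge> 8 * real n * \<mu>"
    and Kb: "K \<ge> (L/\<mu>)^2 / real n" and Kp: "K > 0"
    and lo: "1 / (2*\<mu>*real n*K) \<le> \<eta>" and hi: "\<eta> \<le> 1 / (10 * real m * (L/4))"
  shows "(\<nu>/(L/4)) * ((1 - (1-\<eta>*(L/4))^m * (1+\<eta>*(L/4))^m)
            - (1 - (1-\<eta>*(real n*\<mu>/real kz))^kz) * ((1+\<eta>*(L/4))^m - (1-\<eta>*(L/4))^m * (1+\<eta>*(L/4))^m))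
         \<ge> (\<nu> * real m * (1 / (2*\<mu>*real n*K)) * (L/4) / (5 * real n * \<mu>))
             * (1 - (1-\<eta>*(real n*\<mu>/real kz))^kz * ((1-\<eta>*(L/4))^m * (1+\<eta>*(L/4))^m))"
proof -
  define r where "r = L/4"
  define a where "a = \<eta> * r"
  define lo where "lo = 1 / (2*\<mu>*real n*K)"
  define z where "z = real n*\<mu>/real kz"
  define S where "S = (1 - a^2)^m"
  define Y where "Y = (1 + a)^m"
  define Q where "Q = (1 - \<eta>*z)^kz"
  define e where "e = \<eta> * (real n * \<mu>)"
  define M where "M = real m"
  have n0: "real n > 0" using mn m1 by linarith
  have rpos: "r > 0" proof -
    have "8 * real n * \<mu> > 0" using n0 \<mu> by simp
    then show ?thesis unfolding r_def using Lb by linarith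
  qed
  have Lpos: "L > 0" using rpos unfolding r_def by simp
  have lopos: "lo > 0" unfolding lo_def using \<mu> n0 Kp by simp
  have eta0: "\<eta> > 0" using lo lopos unfolding lo_def by linarith
  have a0: "a \<ge> 0" unfolding a_def using eta0 rpos by simp
  have M1: "M \<ge> 1" unfolding M_def using m1 by simp
  have Ma: "M * a \<le> 1/10"
  proof -
    have "M * a = \<eta> * (10 * M * r) / 10" unfolding a_def by simp
    also have "\<dots> \<le> (1 / (10 * M * r)) * (10 * M * r) / 10"
      using hi M1 rpos unfolding M_def r_def by (intro divide_right_mono mult_right_mono) auto
    also have "\<dots> = 1/10" using M1 rpos by simp
    finally show ?thesis .
  qed
  have a1: "a \<le> 1/10"
  proof -
    have "1 * a \<le> M * a" using M1 a0 by (rule mult_right_mono)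
    then show ?thesis using Ma by linarith
  qed
  have Ma0: "M * a \<ge> 0" using M1 a0 by simp
  have XY: "(1-\<eta>*(L/4))^m * (1+\<eta>*(L/4))^m = S"
    unfolding S_def a_def r_def by (simp add: power_mult_distrib[symmetric] algebra_simps power2_eq_square)
  have S_up: "S \<le> 1 - M * a^2 + (M * a^2)^2 / 2"
    unfolding S_def M_def using a0 a1 by (intro pow_upper2) (auto simp: power2_eq_square mult_le_one)
  have asq1: "a^2 \<le> 1" using a0 a1 by (simp add: power2_eq_square mult_le_one)
  have S_lo: "S \<ge> 1 - M * a^2"
  proof -
    have "1 + real m * (-(a^2)) \<le> (1 + -(a^2))^m" using asq1 by (intro Bernoulli_inequality) simp
    then show ?thesis unfolding S_def M_def by simp
  qed
  have S_le1: "S \<le> 1" unfolding S_def using a0 a1 by (intro power_le_one) (auto simp: power2_eq_square mult_le_one)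
  have S_ge0: "S \<ge> 0" unfolding S_def using a0 a1 by (simp add: power2_eq_square mult_le_one)
  have nmu: "real n * \<mu> \<le> r / 2" unfolding r_def using Lb by simp
  have e_le: "e \<le> a / 2" proof -
    have "\<eta> * (real n * \<mu>) \<le> \<eta> * (r / 2)" using nmu eta0 by (intro mult_left_mono) auto
    then show ?thesis unfolding e_def a_def by simp
  qed
  have e0: "e \<ge> 0" unfolding e_def using eta0 n0 \<mu> by simp
  have ez: "\<eta> * z \<le> e"
  proof -
    have "z \<le> real n * \<mu>" 
    proof -
      have "real n * \<mu> * 1 \<le> real n * \<mu> * real kz" using kz n0 \<mu> by (intro mult_left_mono) auto
      moreover have "real kz > 0" using kz by simp
      ultimately show ?thesis unfolding z_def by (simp add: pos_divide_le_eq)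
    qed
    then show ?thesis unfolding e_def using eta0 by (simp add: mult_left_mono)
  qed
  have ez0: "\<eta> * z \<ge> 0" unfolding z_def using eta0 n0 \<mu> by simp
  have ez1: "\<eta> * z \<le> 1" using ez e_le a1 by linarith
  have Q_lo: "Q \<ge> 1 - e"
  proof -
    have "1 + real kz * (- (\<eta> * z)) \<le> (1 + - (\<eta> * z))^kz" using ez1 by (intro Bernoulli_inequality) simp
    moreover have "real kz * (\<eta> * z) = e" unfolding z_def e_def using kz by simp
    ultimately show ?thesis unfolding Q_def by simp
  qed
  have Q_le1: "Q \<le> 1" unfolding Q_def using ez0 ez1 by (intro power_le_one) auto
  have Q_ge0: "Q \<ge> 0" unfolding Q_def using ez1 by simp
  have Y_up: "Y \<le> 1 + M * a + (M * a)^2" unfolding Y_def M_def using a0 Ma by (intro pow_upper_plus) (auto simp: M_def)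
  have Y_ge1: "Y \<ge> 1" unfolding Y_def using a0 by (simp add: one_le_power)
  have Ma2: "M * a^2 \<le> (M * a) / 10"
  proof -
    have "(M * a) * a \<le> (M * a) * (1/10)" using a1 Ma0 by (rule mult_left_mono)
    then show ?thesis by (simp add: power2_eq_square mult.assoc)
  qed
  have Ma2b: "(M * a)^2 \<le> (M * a) / 10"
  proof -
    have "(M * a) * (M * a) \<le> (M * a) * (1/10)" using Ma Ma0 by (rule mult_left_mono)
    then show ?thesis by (simp add: power2_eq_square)
  qed
  have YS: "Y - S \<le> 12/10 * (M * a)" using Y_up S_lo Ma2 Ma2b by linarith
  have YS0: "Y - S \<ge> 0" using Y_ge1 S_le1 by linarith
  have prod: "(1 - Q) * (Y - S) \<le> (a / 2) * (12/10 * (M * a))"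
    using Q_lo e_le YS YS0 Q_le1 by (intro mult_mono) auto
  have sq: "(M * a^2)^2 / 2 \<le> (M * a^2) / 200"
  proof -
    have "M * a^2 \<le> 1/100" using Ma2 Ma by linarith
    moreover have "M * a^2 \<ge> 0" using M1 by simp
    ultimately have "(M * a^2) * (M * a^2) \<le> (M * a^2) * (1/100)" by (intro mult_left_mono) auto
    then have "(M * a^2)^2 \<le> (M * a^2) * (1/100)" by (simp only: power2_eq_square)
    then show ?thesis by simp
  qed
  have bracket: "(1 - S) - (1 - Q) * (Y - S) \<ge> M * a^2 / 4"
  proof -
    have "(a / 2) * (12/10 * (M * a)) = 6/10 * (M * a^2)" by (simp add: power2_eq_square)
    moreover have "M * a^2 \<ge> 0" using M1 by simp
    ultimately show ?thesis using S_up prod sq by linarith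
  qed
  have rhs: "1 - Q * S \<le> e + M * a^2"
  proof -
    have "1 - Q * S = (1 - Q) + Q * (1 - S)" by (simp add: algebra_simps)
    also have "\<dots> \<le> (1 - Q) + (1 - S)" using mult_right_mono[of Q 1 "1 - S"] Q_le1 S_le1 by simp
    finally have "1 - Q * S \<le> (1 - Q) + (1 - S)" .
    then show ?thesis using Q_lo S_lo by linarith
  qed
  have rhs0: "1 - Q * S \<ge> 0" using mult_le_one[OF Q_le1 S_ge0 S_le1] by linarith
  define l2 where "l2 = \<nu> * M * lo * r / (5 * real n * \<mu>)"
  have l20: "l2 \<ge> 0" unfolding l2_def using \<nu> M1 lopos rpos \<mu> n0 by simp
  have key: "m * lo * r^2 \<le> real n * \<mu> / 4"
  proof -
    have "M * lo * r^2 \<le> (real n / 2) * lo * r^2" using mn lopos unfolding M_def by (intro mult_right_mono) auto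
    also have "\<dots> = L^2 / (64 * \<mu> * K)" unfolding lo_def r_def using n0 \<mu> Kp by (simp add: field_simps power2_eq_square)
    also have "\<dots> \<le> L^2 / (64 * \<mu> * ((L/\<mu>)^2 / real n))"
    proof (rule divide_left_mono)
      show "64 * \<mu> * ((L/\<mu>)^2 / real n) \<le> 64 * \<mu> * K" using Kb \<mu> by (intro mult_left_mono) auto
      show "0 < 64 * \<mu> * K * (64 * \<mu> * ((L/\<mu>)^2 / real n))" using \<mu> Kp n0 Lpos by simp
    qed simp
    also have "\<dots> = real n * \<mu> / 64" using \<mu> n0 Lpos by (simp add: field_simps power2_eq_square)
    finally have "M * lo * r^2 \<le> real n * \<mu> / 64" .
    moreover have "M * lo * r^2 \<ge> 0" using M1 lopos by simp
    ultimately show ?thesis unfolding M_def by linarith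
  qed
  have fin: "l2 * (e + M * a^2) \<le> (\<nu> / r) * (M * a^2 / 4)"
  proof -
    have t1: "l2 * e \<le> \<nu> * M * \<eta>^2 * r / 5"
    proof -
      have "l2 * e = \<nu> * M * r * \<eta> * lo / 5" unfolding l2_def e_def using n0 \<mu> by (simp add: field_simps)
      also have "\<dots> \<le> \<nu> * M * r * \<eta> * \<eta> / 5" using lo \<nu> M1 rpos eta0 unfolding lo_def
        by (intro divide_right_mono mult_left_mono) auto
      finally show ?thesis by (simp add: power2_eq_square mult_ac)
    qed
    have t2: "l2 * (M * a^2) \<le> \<nu> * M * \<eta>^2 * r / 20"
    proof -
      have "l2 * (M * a^2) = (\<nu> * M * \<eta>^2 * r / (5 * real n * \<mu>)) * (M * lo * r^2)"
        unfolding l2_def a_def by (simp add: field_simps power2_eq_square)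
      also have "\<dots> \<le> (\<nu> * M * \<eta>^2 * r / (5 * real n * \<mu>)) * (real n * \<mu> / 4)"
        using key \<nu> M1 rpos n0 \<mu> unfolding M_def by (intro mult_left_mono) auto
      also have "\<dots> = \<nu> * M * \<eta>^2 * r / 20" using n0 \<mu> by (simp add: field_simps)
      finally show ?thesis .
    qed
    have eq1: "(\<nu> / r) * (M * a^2 / 4) = \<nu> * M * \<eta>^2 * r / 4" unfolding a_def using rpos by (simp add: field_simps power2_eq_square)
    have eq2: "l2 * (e + M * a^2) = l2 * e + l2 * (M * a^2)" by (simp add: distrib_left)
    show ?thesis unfolding eq1 eq2 using t1 t2 by linarith
  qed
  have "l2 * (1 - Q * S) \<le> l2 * (e + M * a^2)" using rhs l20 by (intro mult_left_mono) auto
  also have "\<dots> \<le> (\<nu> / r) * (M * a^2 / 4)" by (rule fin)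
  also have "\<dots> \<le> (\<nu> / r) * ((1 - S) - (1 - Q) * (Y - S))" using bracket \<nu> rpos by (intro mult_left_mono) auto
  finally have main: "l2 * (1 - Q * S) \<le> (\<nu> / r) * ((1 - S) - (1 - Q) * (Y - S))" .
  have Yeq: "(1+\<eta>*(L/4))^m = Y" unfolding Y_def a_def r_def by simp
  have Qeq: "(1-\<eta>*(real n*\<mu>/real kz))^kz = Q" unfolding Q_def z_def by simp
  show ?thesis unfolding XY unfolding Yeq Qeq using main unfolding l2_def lo_def r_def M_def by simp
qed

lemma R3_cond:
  fixes m n :: nat and \<mu> L \<nu> \<eta> h ab :: real
  assumes n3: "n \<ge> 3" and m1: "m \<ge> 1" and mn: "2 * real m \<le> real n"
    and \<mu>: "\<mu> > 0" and \<nu>: "\<nu> > 0" and Lb: "L \<ge> 8 * real n * \<mu>"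
    and h: "h = 1 / (10 * real m * (L/4))"
    and ab: "ab = max \<mu> (h * (L/4)^2 / real n)"
    and lo: "h \<le> \<eta>" and hi: "\<eta> \<le> 2 / L"
  shows "(\<nu>/(L/4)) * ((1 - (1-\<eta>*(L/4))^1 * (1+\<eta>*(L/4))^1)
            - (1 - (1-\<eta>*(real n * ab / real (n-2)))^(n-2)) * ((1+\<eta>*(L/4))^1 - (1-\<eta>*(L/4))^1 * (1+\<eta>*(L/4))^1))
         \<ge> (\<nu> * h * (L/4) / (8 * real n * ab))
             * (1 - (1-\<eta>*(real n * ab / real (n-2)))^(n-2) * ((1-\<eta>*(L/4))^1 * (1+\<eta>*(L/4))^1))"
proof -
  define r where "r = L/4"
  define a where "a = \<eta> * r"
  define z where "z = real n * ab / real (n-2)"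
  define Q where "Q = (1 - \<eta>*z)^(n-2)"
  define e where "e = \<eta> * (real n * ab)"
  have n0: "real n > 0" using n3 by simp
  have n2: "real (n-2) > 0" using n3 by simp
  have Lpos: "L > 0" proof -
    have "8 * real n * \<mu> > 0" using n0 \<mu> by simp
    then show ?thesis using Lb by linarith
  qed
  have rpos: "r > 0" unfolding r_def using Lpos by simp
  have M1: "real m \<ge> 1" using m1 by simp
  have hpos: "h > 0" unfolding h using M1 Lpos by simp
  have eta0: "\<eta> > 0" using lo hpos by linarith
  have a0: "a \<ge> 0" unfolding a_def using eta0 rpos by simp
  have a1: "a \<le> 1/2"
  proof -
    have "a \<le> (2 / L) * r" unfolding a_def using hi rpos by (intro mult_right_mono) auto
    then show ?thesis unfolding r_def using Lpos by simp
  qed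
  have ab_mu: "ab \<ge> \<mu>" unfolding ab by simp
  have abpos: "ab > 0" using ab_mu \<mu> by linarith
  have hr: "h * r^2 \<le> r / 2"
  proof -
    have "h * r^2 = r / (10 * real m)" unfolding h r_def using M1 Lpos by (simp add: field_simps power2_eq_square)
    also have "\<dots> \<le> r / 2" using M1 rpos by (intro divide_left_mono) auto
    finally show ?thesis .
  qed
  have nab: "real n * ab \<le> r / 2"
  proof -
    have "real n * \<mu> \<le> r / 2" unfolding r_def using Lb by simp
    moreover have "real n * (h * r^2 / real n) \<le> r / 2" using hr n0 by simp
    ultimately show ?thesis unfolding ab r_def by (simp add: max_def)
  qed
  have hrab: "h * r^2 \<le> real n * ab"
  proof -
    have "real n * (h * r^2 / real n) \<le> real n * ab" unfolding ab r_def using n0 by (intro mult_left_mono) auto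
    then show ?thesis using n0 by simp
  qed
  have e_le: "e \<le> a / 2"
  proof -
    have "\<eta> * (real n * ab) \<le> \<eta> * (r / 2)" using nab eta0 by (intro mult_left_mono) auto
    then show ?thesis unfolding e_def a_def by simp
  qed
  have e0: "e \<ge> 0" unfolding e_def using eta0 n0 abpos by simp
  have ez: "real (n-2) * (\<eta> * z) = e" unfolding z_def e_def using n2 by simp
  have ez0: "\<eta> * z \<ge> 0" unfolding z_def using eta0 n0 abpos n2 by simp
  have ez1: "\<eta> * z \<le> 1"
  proof -
    have "1 * (\<eta> * z) \<le> real (n-2) * (\<eta> * z)" using n3 ez0 by (intro mult_right_mono) auto
    then show ?thesis using ez e_le a1 by linarith
  qed
  have Q_lo: "Q \<ge> 1 - e"
  proof -
    have "1 + real (n-2) * (- (\<eta> * z)) \<le> (1 + - (\<eta> * z))^(n-2)" using ez1 by (intro Bernoulli_inequality) simp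
    then show ?thesis unfolding Q_def using ez by simp
  qed
  have Q_le1: "Q \<le> 1" unfolding Q_def using ez0 ez1 by (intro power_le_one) auto
  have Q_ge0: "Q \<ge> 0" unfolding Q_def using ez1 by simp
  have S: "(1-\<eta>*(L/4))^1 * (1+\<eta>*(L/4))^1 = 1 - a^2"
    unfolding a_def r_def by (simp add: algebra_simps power2_eq_square)
  have Y: "(1+\<eta>*(L/4))^1 = 1 + a" unfolding a_def r_def by simp
  have Qe: "(1-\<eta>*(real n * ab / real (n-2)))^(n-2) = Q" unfolding Q_def z_def by simp
  have asq: "a^2 \<le> a / 2"
  proof -
    have "a * a \<le> a * (1/2)" using a0 a1 by (rule mult_left_mono[rotated])
    then show ?thesis by (simp add: power2_eq_square)
  qed
  have YS: "(1 + a) - (1 - a^2) \<le> 3/2 * a" using asq by simp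
  have YS0: "(1 + a) - (1 - a^2) \<ge> 0" using a0 by simp
  have prod: "(1 - Q) * ((1 + a) - (1 - a^2)) \<le> (a/2) * (3/2 * a)"
    using Q_lo e_le YS YS0 Q_le1 by (intro mult_mono) auto
  have pe: "(a/2) * (3/2 * a) = 3/4 * a^2" by (simp add: power2_eq_square)
  have bracket: "(1 - (1 - a^2)) - (1 - Q) * ((1 + a) - (1 - a^2)) \<ge> a^2 / 4"
    using prod pe by linarith
  have rhs: "1 - Q * (1 - a^2) \<le> e + a^2"
  proof -
    have "1 - Q * (1 - a^2) = (1 - Q) + Q * a^2" by (simp add: algebra_simps)
    also have "\<dots> \<le> (1 - Q) + a^2" using mult_right_mono[of Q 1 "a^2"] Q_le1 by simp
    finally show ?thesis using Q_lo by linarith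
  qed
  define l3 where "l3 = \<nu> * h * r / (8 * real n * ab)"
  have l30: "l3 \<ge> 0" unfolding l3_def using \<nu> hpos rpos n0 abpos by simp
  have t1: "l3 * e \<le> \<nu> * \<eta>^2 * r / 8"
  proof -
    have "l3 * e = \<nu> * r * \<eta> * h / 8" unfolding l3_def e_def using n0 abpos by (simp add: field_simps)
    also have "\<dots> \<le> \<nu> * r * \<eta> * \<eta> / 8" using lo \<nu> rpos eta0
      by (intro divide_right_mono mult_left_mono) auto
    finally show ?thesis by (simp add: power2_eq_square mult_ac)
  qed
  have t2: "l3 * a^2 \<le> \<nu> * \<eta>^2 * r / 8"
  proof -
    have "l3 * a^2 = (\<nu> * \<eta>^2 * r / (8 * real n * ab)) * (h * r^2)"
      unfolding l3_def a_def by (simp add: field_simps power2_eq_square)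
    also have "\<dots> \<le> (\<nu> * \<eta>^2 * r / (8 * real n * ab)) * (real n * ab)"
      using hrab \<nu> rpos n0 abpos by (intro mult_left_mono) auto
    also have "\<dots> = \<nu> * \<eta>^2 * r / 8" using n0 abpos by (simp add: field_simps)
    finally show ?thesis .
  qed
  have eq1: "(\<nu> / r) * (a^2 / 4) = \<nu> * \<eta>^2 * r / 4" unfolding a_def using rpos by (simp add: field_simps power2_eq_square)
  have eq2: "l3 * (e + a^2) = l3 * e + l3 * a^2" by (simp add: distrib_left)
  have fin: "l3 * (e + a^2) \<le> (\<nu> / r) * (a^2 / 4)" unfolding eq1 eq2 using t1 t2 by linarith
  have "l3 * (1 - Q * (1 - a^2)) \<le> l3 * (e + a^2)" using rhs l30 by (intro mult_left_mono) auto
  also have "\<dots> \<le> (\<nu> / r) * (a^2 / 4)" by (rule fin)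
  also have "\<dots> \<le> (\<nu> / r) * ((1 - (1 - a^2)) - (1 - Q) * ((1 + a) - (1 - a^2)))"
    using bracket \<nu> rpos by (intro mult_left_mono) auto
  finally have main: "l3 * (1 - Q * (1 - a^2)) \<le> (\<nu> / r) * ((1 - (1 - a^2)) - (1 - Q) * ((1 + a) - (1 - a^2)))" .
  show ?thesis unfolding S unfolding Y Qe using main unfolding l3_def r_def by simp
qed

lemma sum_piece3:
  fixes x y w :: real
  assumes "p \<le> q" "q \<le> n"
  shows "(\<Sum>i<n. if i < p then x else if i < q then y else w)
         = real p * x + (real q - real p) * y + (real n - real q) * w"
proof -
  let ?f = "\<lambda>i. if i < p then x else if i < q then y else w"
  have e1: "sum ?f {0..<p} + sum ?f {p..<q} = sum ?f {0..<q}"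
    using assms by (intro sum.atLeastLessThan_concat) auto
  have e2: "sum ?f {0..<q} + sum ?f {q..<n} = sum ?f {0..<n}"
    using assms by (intro sum.atLeastLessThan_concat) auto
  have "(\<Sum>i<n. ?f i) = sum ?f {0..<p} + sum ?f {p..<q} + sum ?f {q..<n}"
    unfolding e1 e2 lessThan_atLeast0 ..
  also have "sum ?f {0..<p} = real p * x" by simp
  also have "sum ?f {p..<q} = (real q - real p) * y" using assms by (simp add: of_nat_diff)
  also have "sum ?f {q..<n} = (real n - real q) * w" using assms by (simp add: of_nat_diff)
  finally show ?thesis .
qed

lemma sum_two_points:
  fixes x y w :: real
  shows "(\<Sum>i<n. if i = p then x else if i = Suc p then y else w)
         = real n * w + (if p < n then x - w else 0) + (if Suc p < n then y - w else 0)"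
  by (induction n) (auto simp: algebra_simps)

lemma count_perm:
  assumes "p permutes {0..<n}"
  shows "length (filter P (map p [0..<n])) = card {i. i < n \<and> P i}"
proof -
  have inj: "inj_on p {0..<n}" using assms by (meson permutes_inj_on)
  have d: "distinct (map p [0..<n])" using inj by (simp add: distinct_map)
  have s: "set (map p [0..<n]) = {0..<n}" using assms by (simp add: permutes_image)
  show ?thesis using distinct_length_filter[OF d, of P] s
    by (simp add: Int_def conj_commute atLeast0LessThan)
qed

lemma start_inv:
  assumes "x0 $ j \<ge> l"
    and "\<And>k x. Suc k \<le> K \<Longrightarrow> x $ j \<ge> l \<Longrightarrow> (sgd_epoch n g \<eta> (\<sigma> (Suc k)) x) $ j \<ge> l"
  shows "k \<le> K \<Longrightarrow> (sgd_start n g \<eta> \<sigma> x0 k) $ j \<ge> l"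
  by (induction k) (use assms in auto)

lemma start_lin:
  fixes q :: real
  assumes "\<And>k x. Suc k \<le> K \<Longrightarrow> (sgd_epoch n g \<eta> (\<sigma> (Suc k)) x) $ j = q * x $ j"
  shows "k \<le> K \<Longrightarrow> (sgd_start n g \<eta> \<sigma> x0 k) $ j = q ^ k * x0 $ j"
  by (induction k) (use assms in auto)

lemma "(1::4) \<noteq> 2 \<and> (1::4) \<noteq> 3 \<and> (1::4) \<noteq> 4 \<and> (2::4) \<noteq> 3 \<and> (2::4) \<noteq> 4 \<and> (3::4) \<noteq> 4"
  by simp

definition mm :: "nat \<Rightarrow> nat" where "mm n = (n - 2) div 2"
definition MM :: "nat \<Rightarrow> nat" where "MM n = n div 2"
definition etalo :: "nat \<Rightarrow> real \<Rightarrow> real \<Rightarrow> real" where "etalo n \<mu> K = 1 / (2*\<mu>*real n*K)"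
definition eta2 :: "nat \<Rightarrow> real \<Rightarrow> real" where "eta2 n L = 1 / (10 * real (mm n) * (L/4))"
definition ab3 :: "nat \<Rightarrow> real \<Rightarrow> real \<Rightarrow> real" where "ab3 n L \<mu> = max \<mu> (eta2 n L * (L/4)^2 / real n)"
definition l2v :: "nat \<Rightarrow> real \<Rightarrow> real \<Rightarrow> real \<Rightarrow> real \<Rightarrow> real" where
  "l2v n L \<mu> \<nu> K = \<nu> * real (mm n) * etalo n \<mu> K * (L/4) / (5 * real n * \<mu>)"
definition l3v :: "nat \<Rightarrow> real \<Rightarrow> real \<Rightarrow> real \<Rightarrow> real" where
  "l3v n L \<mu> \<nu> = \<nu> * eta2 n L * (L/4) / (8 * real n * ab3 n L \<mu>)"

definition Ac :: "nat \<Rightarrow> real \<Rightarrow> real \<Rightarrow> nat \<Rightarrow> 4 \<Rightarrow> real" where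
  "Ac n L \<mu> i j = (if j = 1 then \<mu>
     else if j = 2 then (if i < mm n then L/4 else if i < 2 * mm n then -(L/4) else real n * \<mu> / real (n - 2 * mm n))
     else if j = 3 then (if i = 2 * mm n then L/4 else if i = Suc (2 * mm n) then -(L/4) else real n * ab3 n L \<mu> / real (n - 2))
     else (if i < 2 * MM n then L else 0))"

definition Bc :: "nat \<Rightarrow> real \<Rightarrow> nat \<Rightarrow> 4 \<Rightarrow> real" where
  "Bc n \<nu> i j = (if j = 2 then (if i < mm n then -\<nu> else if i < 2 * mm n then \<nu> else 0)
     else if j = 3 then (if i = 2 * mm n then -\<nu> else if i = Suc (2 * mm n) then \<nu> else 0)
     else 0)"

lemma mm_facts:
  assumes "n \<ge> 104"
  shows "mm n \<ge> 1" "2 * mm n + 2 \<le> n" "n \<le> 2 * mm n + 3" "n \<le> 3 * mm n" "2 * real (mm n) \<le> real n"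
    "n - 2 * mm n \<ge> 1" "n \<le> 2 * MM n + 1" "2 * MM n \<le> n"
  using assms unfolding mm_def MM_def by auto

lemma sum_piece2:
  fixes x w :: real
  assumes "q \<le> n"
  shows "(\<Sum>i<n. if i < q then x else w) = real q * x + (real n - real q) * w"
proof -
  have "(\<Sum>i<n. if i < q then x else w) = (\<Sum>i<n. if i < q then x else if i < q then x else w)"
    by (rule sum.cong) auto
  then show ?thesis using sum_piece3[of q q n x x w] assms by simp
qed

lemma Bc_sum:
  assumes "n \<ge> 104"
  shows "(\<Sum>i<n. Bc n \<nu> i j) = 0"
proof -
  note mf = mm_facts[OF assms]
  consider "j = 1" | "j = 2" | "j = 3" | "j = 4" by (metis exhaust_4)
  then show ?thesis
  proof cases
    case 2
    then have "(\<Sum>i<n. Bc n \<nu> i j) = (\<Sum>i<n. if i < mm n then -\<nu> else if i < 2 * mm n then \<nu> else 0)"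
      unfolding Bc_def by simp
    also have "\<dots> = 0" using mf by (subst sum_piece3) (auto simp: algebra_simps)
    finally show ?thesis .
  next
    case 3
    then have "(\<Sum>i<n. Bc n \<nu> i j) = (\<Sum>i<n. if i = 2 * mm n then -\<nu> else if i = Suc (2 * mm n) then \<nu> else 0)"
      unfolding Bc_def by simp
    also have "\<dots> = 0" using mf by (subst sum_two_points) auto
    finally show ?thesis .
  qed (simp_all add: Bc_def)
qed


lemma abar_Ac:
  assumes n: "n \<ge> 104"
  shows "abar n (Ac n L \<mu>) j = (if j = 4 then real (2 * MM n) * L / real n else if j = 3 then ab3 n L \<mu> else \<mu>)"
proof -
  note mf = mm_facts[OF assms]
  have n0: "real n > 0" using n by simp
  consider "j = 1" | "j = 2" | "j = 3" | "j = 4" by (metis exhaust_4)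
  then show ?thesis
  proof cases
    case 1
    then show ?thesis unfolding abar_def Ac_def using n0 by simp
  next
    case 2
    then have "(\<Sum>i<n. Ac n L \<mu> i j) = (\<Sum>i<n. if i < mm n then L/4 else if i < 2 * mm n then -(L/4) else real n * \<mu> / real (n - 2 * mm n))"
      unfolding Ac_def by simp
    also have "\<dots> = real (mm n) * (L/4) + (real (2 * mm n) - real (mm n)) * (-(L/4)) + (real n - real (2 * mm n)) * (real n * \<mu> / real (n - 2 * mm n))"
      using mf by (intro sum_piece3) auto
    also have "\<dots> = real n * \<mu>"
    proof -
      have "real n - real (2 * mm n) = real (n - 2 * mm n)" using mf by (simp add: of_nat_diff)
      moreover have "real (n - 2 * mm n) > 0" using mf by simp
      ultimately have h: "(real n - real (2 * mm n)) * (real n * \<mu> / real (n - 2 * mm n)) = real n * \<mu>" by simp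
      have h0: "real (mm n) * (L/4) + (real (2 * mm n) - real (mm n)) * (-(L/4)) = 0" by (simp add: algebra_simps)
      show ?thesis unfolding h0 h by simp
    qed
    finally show ?thesis unfolding abar_def using 2 n0 by simp
  next
    case 3
    then have "(\<Sum>i<n. Ac n L \<mu> i j) = (\<Sum>i<n. if i = 2 * mm n then L/4 else if i = Suc (2 * mm n) then -(L/4) else real n * ab3 n L \<mu> / real (n - 2))"
      unfolding Ac_def by simp
    also have "\<dots> = real n * (real n * ab3 n L \<mu> / real (n - 2)) + (L/4 - real n * ab3 n L \<mu> / real (n - 2)) + (-(L/4) - real n * ab3 n L \<mu> / real (n - 2))"
      using mf by (subst sum_two_points) auto
    also have "\<dots> = real n * ab3 n L \<mu>"
    proof -
      define w where "w = real n * ab3 n L \<mu> / real (n - 2)"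
      have "real (n - 2) = real n - 2" using n by (simp add: of_nat_diff)
      moreover have "real n - 2 > 0" using n by simp
      ultimately have hw: "(real n - 2) * w = real n * ab3 n L \<mu>" unfolding w_def by simp
      have "real n * w + (L/4 - w) + (-(L/4) - w) = (real n - 2) * w" by (simp add: algebra_simps)
      then show ?thesis using hw unfolding w_def by simp
    qed
    finally show ?thesis unfolding abar_def using 3 n0 by simp
  next
    case 4
    then have "(\<Sum>i<n. Ac n L \<mu> i j) = (\<Sum>i<n. if i < 2 * MM n then L else 0)"
      unfolding Ac_def by simp
    also have "\<dots> = real (2 * MM n) * L" using mf by (subst sum_piece2) auto
    finally show ?thesis unfolding abar_def using 4 by simp
  qed
qed


locale params =
  fixes n :: nat and L \<mu> \<nu> K :: real
  assumes n: "n \<ge> 104" and \<mu>: "\<mu> > 0" and \<nu>: "\<nu> > 0" and kap: "L / \<mu> \<ge> 8 * real n"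
    and K1: "K \<ge> (L/\<mu>)^2 / real n" and K2: "K \<ge> (L/\<mu>) powr (3/2) * sqrt (real n)"
begin

lemma n0: "real n > 0" using n by simp
lemma Lb: "L \<ge> 8 * real n * \<mu>" using kap \<mu> by (simp add: field_simps)
lemma Lpos: "L > 0" proof -
  have "8 * real n * \<mu> > 0" using n0 \<mu> by simp
  then show ?thesis using Lb by linarith
qed
lemma Kpos: "K > 0" proof -
  have "(L/\<mu>)^2 / real n > 0" using Lpos \<mu> n0 by simp
  then show ?thesis using K1 by linarith
qed
lemma K2sq: "K^2 \<ge> (L/\<mu>)^3 * real n"
proof -
  have k0: "L/\<mu> > 0" using Lpos \<mu> by simp
  have "((L/\<mu>) powr (3/2) * sqrt (real n))^2 = ((L/\<mu>) powr (3/2))^2 * real n"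
    using n0 by (simp add: power_mult_distrib)
  also have "((L/\<mu>) powr (3/2))^2 = (L/\<mu>)^3"
  proof -
    have "((L/\<mu>) powr (3/2))^2 = (L/\<mu>) powr (3/2) * (L/\<mu>) powr (3/2)" by (simp add: power2_eq_square)
    also have "\<dots> = (L/\<mu>) powr (3/2 + 3/2)" by (simp only: powr_add)
    also have "(3/2 + 3/2 :: real) = 3" by simp
    also have "(L/\<mu>) powr 3 = (L/\<mu>)^3" using k0 by simp
    finally show ?thesis .
  qed
  finally have e: "((L/\<mu>) powr (3/2) * sqrt (real n))^2 = (L/\<mu>)^3 * real n" .
  have "0 \<le> (L/\<mu>) powr (3/2) * sqrt (real n)" by simp
  then have "((L/\<mu>) powr (3/2) * sqrt (real n))^2 \<le> K^2" using K2 by (intro power_mono) auto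
  then show ?thesis using e by simp
qed

lemma m1: "mm n \<ge> 1" using mm_facts[OF n] by simp
lemma eta2pos: "eta2 n L > 0" unfolding eta2_def using m1 Lpos by simp
lemma ab3_mu: "ab3 n L \<mu> \<ge> \<mu>" unfolding ab3_def by simp
lemma ab3pos: "ab3 n L \<mu> > 0" using ab3_mu \<mu> by linarith
lemma nab3: "real n * ab3 n L \<mu> \<le> L / 8"
proof -
  have "eta2 n L * (L/4)^2 = (L/4) / (10 * real (mm n))" unfolding eta2_def using m1 Lpos by (simp add: field_simps power2_eq_square)
  also have "\<dots> \<le> (L/4) / 2" using m1 Lpos by (intro divide_left_mono) auto
  finally have "real n * (eta2 n L * (L/4)^2 / real n) \<le> L / 8" using n0 by simp
  moreover have "real n * \<mu> \<le> L / 8" using Lb by simp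
  ultimately show ?thesis unfolding ab3_def by (simp add: max_def)
qed

lemma abar_mu: "abar n (Ac n L \<mu>) j \<ge> \<mu>"
proof -
  have "real (2 * MM n) * L / real n \<ge> \<mu>"
  proof -
    have "real (2 * MM n) \<ge> 1" using mm_facts[OF n] by simp
    then have "real (2 * MM n) * L \<ge> 1 * (8 * real n * \<mu>)" using Lb Lpos \<mu> n0 by (intro mult_mono) auto
    moreover have "1 * (8 * real n * \<mu>) \<ge> \<mu> * real n" using \<mu> n0 by simp
    ultimately have "real (2 * MM n) * L \<ge> \<mu> * real n" by linarith
    then show ?thesis using n0 by (simp add: pos_le_divide_eq)
  qed
  then show ?thesis unfolding abar_Ac[OF n] using ab3_mu by auto
qed

lemma abar_le: "abar n (Ac n L \<mu>) j \<le> L"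
proof -
  have "real (2 * MM n) * L / real n \<le> L"
  proof -
    have "real (2 * MM n) \<le> real n" using mm_facts[OF n] by simp
    then have "real (2 * MM n) * L \<le> real n * L" using Lpos by (intro mult_right_mono) auto
    then show ?thesis using n0 by (simp add: pos_divide_le_eq mult.commute)
  qed
  moreover have "ab3 n L \<mu> \<le> L"
  proof -
    have "1 * ab3 n L \<mu> \<le> real n * ab3 n L \<mu>" using n ab3pos by (intro mult_right_mono) auto
    then show ?thesis using nab3 Lpos by linarith
  qed
  moreover have "\<mu> \<le> L"
  proof -
    have "1 * \<mu> \<le> (8 * real n) * \<mu>" using n \<mu> by (intro mult_right_mono) auto
    then show ?thesis using Lb by linarith
  qed
  ultimately show ?thesis unfolding abar_Ac[OF n] by auto
qed

lemma z2_bounds: "0 \<le> real n * \<mu> / real (n - 2 * mm n)" "real n * \<mu> / real (n - 2 * mm n) \<le> L / 8"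
proof -
  have d: "real (n - 2 * mm n) \<ge> 1" using mm_facts[OF n] by simp
  show "0 \<le> real n * \<mu> / real (n - 2 * mm n)" using \<mu> d by simp
  have "real n * \<mu> / real (n - 2 * mm n) \<le> real n * \<mu> / 1"
    using d \<mu> n0 by (intro divide_left_mono) auto
  then have "real n * \<mu> / real (n - 2 * mm n) \<le> real n * \<mu>" by simp
  moreover have "real n * \<mu> \<le> L / 8" using Lb by simp
  ultimately show "real n * \<mu> / real (n - 2 * mm n) \<le> L / 8" by (rule order_trans)
qed

lemma z3_bounds: "0 \<le> real n * ab3 n L \<mu> / real (n - 2)" "real n * ab3 n L \<mu> / real (n - 2) \<le> L / 8"
proof -
  have d: "real (n - 2) \<ge> 1" using n by simp
  show "0 \<le> real n * ab3 n L \<mu> / real (n - 2)" using ab3pos d by simp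
  have "real n * ab3 n L \<mu> / real (n - 2) \<le> real n * ab3 n L \<mu> / 1"
    using d ab3pos n0 by (intro divide_left_mono) auto
  then have "real n * ab3 n L \<mu> / real (n - 2) \<le> real n * ab3 n L \<mu>" by simp
  then show "real n * ab3 n L \<mu> / real (n - 2) \<le> L / 8" using nab3 by (rule order_trans)
qed

lemma Ac_bounds:
  shows "\<bar>Ac n L \<mu> i j\<bar> \<le> L" "\<bar>Ac n L \<mu> i j - abar n (Ac n L \<mu>) j\<bar> \<le> L"
proof -
  have muL: "\<mu> \<le> L / 8"
  proof -
    have "1 * \<mu> \<le> real n * \<mu>" using n \<mu> by (intro mult_right_mono) auto
    then show ?thesis using Lb by linarith
  qed
  have ab3L: "ab3 n L \<mu> \<le> L / 8"
  proof -
    have "1 * ab3 n L \<mu> \<le> real n * ab3 n L \<mu>" using n ab3pos by (intro mult_right_mono) auto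
    then show ?thesis using nab3 by linarith
  qed
  note z2 = z2_bounds and z3 = z3_bounds
  have ab_lo: "abar n (Ac n L \<mu>) j \<ge> 0" using abar_mu[of j] \<mu> by linarith
  have ab_hi: "abar n (Ac n L \<mu>) j \<le> L" by (rule abar_le)
  consider "j = 1" | "j = 2" | "j = 3" | "j = 4" by (metis exhaust_4)
  then have "(Ac n L \<mu> i j \<ge> 0 \<and> Ac n L \<mu> i j \<le> L) \<or>
             (\<bar>Ac n L \<mu> i j\<bar> \<le> L/4 \<and> abar n (Ac n L \<mu>) j \<le> L/8)"
  proof cases
    case 1 then show ?thesis unfolding Ac_def using \<mu> muL Lpos by auto
  next
    case 2
    define z where "z = real n * \<mu> / real (n - 2 * mm n)"
    have zb: "0 \<le> z" "z \<le> L / 8" using z2 unfolding z_def by auto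
    have ab: "abar n (Ac n L \<mu>) j \<le> L/8" unfolding abar_Ac[OF n] using 2 muL by simp
    have "Ac n L \<mu> i j = L/4 \<or> Ac n L \<mu> i j = -(L/4) \<or> Ac n L \<mu> i j = z" unfolding Ac_def z_def using 2 by auto
    then show ?thesis using zb ab Lpos by auto
  next
    case 3
    define z where "z = real n * ab3 n L \<mu> / real (n - 2)"
    have zb: "0 \<le> z" "z \<le> L / 8" using z3 unfolding z_def by auto
    have ab: "abar n (Ac n L \<mu>) j \<le> L/8" unfolding abar_Ac[OF n] using 3 ab3L by simp
    have "Ac n L \<mu> i j = L/4 \<or> Ac n L \<mu> i j = -(L/4) \<or> Ac n L \<mu> i j = z" unfolding Ac_def z_def using 3 by auto
    then show ?thesis using zb ab Lpos by auto
  next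
    case 4 then show ?thesis unfolding Ac_def using Lpos by auto
  qed
  then show "\<bar>Ac n L \<mu> i j\<bar> \<le> L" "\<bar>Ac n L \<mu> i j - abar n (Ac n L \<mu>) j\<bar> \<le> L"
    using ab_lo ab_hi Lpos by auto
qed

lemma Bc_norm: "norm (\<chi> j. Bc n \<nu> i j) \<le> \<nu>"
proof -
  have e: "norm (\<chi> j. Bc n \<nu> i j) = sqrt ((Bc n \<nu> i 2)^2 + (Bc n \<nu> i 3)^2)"
    unfolding norm_vec_def L2_set_def by (simp add: sum_4 Bc_def)
  have "(Bc n \<nu> i 2)^2 + (Bc n \<nu> i 3)^2 \<le> \<nu>^2"
    unfolding Bc_def by auto
  then have "sqrt ((Bc n \<nu> i 2)^2 + (Bc n \<nu> i 3)^2) \<le> sqrt (\<nu>^2)" by (rule real_sqrt_le_mono)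
  then show ?thesis unfolding e using \<nu> by simp
qed

lemma PL: "in_PL_class n (qf (Ac n L \<mu>) (Bc n \<nu>)) (qg (Ac n L \<mu>) (Bc n \<nu>)) L \<mu> (L / \<mu>) \<nu>"
  by (rule in_PL_qf) (use n0 Bc_sum[OF n] \<mu> Ac_bounds abar_mu Bc_norm in auto)

abbreviation "gg \<equiv> qg (Ac n L \<mu>) (Bc n \<nu>)"

lemma R1_epoch:
  assumes "p permutes {0..<n}"
  shows "(sgd_epoch n gg \<eta> p x) $ 1 = (1 - \<eta> * \<mu>)^n * x $ 1"
proof -
  have lam: "(\<lambda>t i. t - \<eta> * (Ac n L \<mu> i 1 * t + Bc n \<nu> i 1)) = (\<lambda>t i. t - \<eta> * ((\<lambda>i. \<mu>) i * t + 0))"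
    by (simp add: fun_eq_iff Ac_def Bc_def)
  show ?thesis unfolding epoch_coord lam foldl_linear prod_list_const by simp
qed

lemma R4_epoch:
  assumes "p permutes {0..<n}"
  shows "(sgd_epoch n gg \<eta> p x) $ 4 = (1 - \<eta> * L)^(2 * MM n) * x $ 4"
proof -
  have lam: "(\<lambda>t i. t - \<eta> * (Ac n L \<mu> i 4 * t + Bc n \<nu> i 4)) = (\<lambda>t i. t - \<eta> * ((\<lambda>i. if i < 2 * MM n then L else 0) i * t + 0))"
    by (simp add: fun_eq_iff Ac_def Bc_def)
  have pl: "prod_list (map (\<lambda>i. 1 - \<eta> * (if i < 2 * MM n then L else 0)) xs)
        = prod_list (map (\<lambda>i. if i < 2 * MM n then 1 - \<eta> * L else 1) xs)" for xs :: "nat list"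
    by (induction xs) auto
  have c: "card {i. i < n \<and> i < 2 * MM n} = 2 * MM n"
  proof -
    have "{i. i < n \<and> i < 2 * MM n} = {..<2 * MM n}" using mm_facts[OF n] by auto
    then show ?thesis by simp
  qed
  show ?thesis unfolding epoch_coord lam foldl_linear pl prod_list_if count_perm[OF assms] c ..
qed

lemma R2_epoch:
  assumes p: "p permutes {0..<n}" and lo: "etalo n \<mu> K \<le> \<eta>" and hi: "\<eta> \<le> eta2 n L"
    and x: "x $ 2 \<ge> l2v n L \<mu> \<nu> K"
  shows "(sgd_epoch n gg \<eta> p x) $ 2 \<ge> l2v n L \<mu> \<nu> K"
proof -
  define m where "m = mm n"
  define r where "r = L / 4"
  define z where "z = real n * \<mu> / real (n - 2 * m)"
  define ty where "ty = (\<lambda>i::nat. if i < m then 0 else if i < 2 * m then 2 else (1::nat))"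
  note mf = mm_facts[OF n]
  have M1: "real m \<ge> 1" using mf unfolding m_def by simp
  have rpos: "r > 0" unfolding r_def using Lpos by simp
  have lopos: "etalo n \<mu> K > 0" unfolding etalo_def using \<mu> n0 Kpos by simp
  have eta0: "\<eta> > 0" using lo lopos by linarith
  have er: "\<eta> * r \<le> 1"
  proof -
    have "\<eta> * r \<le> eta2 n L * r" using hi rpos by (intro mult_right_mono) auto
    also have "\<dots> = 1 / (10 * real m)" unfolding eta2_def r_def m_def using M1 Lpos by (simp add: field_simps)
    also have "\<dots> \<le> 1" using M1 by simp
    finally show ?thesis .
  qed
  have zb: "0 \<le> z" "z \<le> r / 2" using z2_bounds unfolding z_def r_def m_def by auto
  have ez0: "\<eta> * z \<ge> 0" using eta0 zb by simp
  have ez1: "\<eta> * z \<le> 1"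
  proof -
    have "\<eta> * z \<le> \<eta> * r" using zb rpos eta0 by (intro mult_left_mono) auto
    then show ?thesis using er by linarith
  qed
  interpret U: uzd \<eta> r z \<nu> using eta0 \<nu> rpos er ez0 ez1 by unfold_locales auto
  have tyOK: "\<forall>i\<in>set (map p [0..<n]). (ty i = 0 \<and> Ac n L \<mu> i 2 = r \<and> Bc n \<nu> i 2 = - \<nu>) \<or> (ty i = 1 \<and> Ac n L \<mu> i 2 = z \<and> Bc n \<nu> i 2 = 0)
                        \<or> (ty i = 2 \<and> Ac n L \<mu> i 2 = - r \<and> Bc n \<nu> i 2 = \<nu>)"
    unfolding ty_def Ac_def Bc_def z_def r_def m_def by auto
  have c0: "card {i. i < n \<and> ty i = 0} = m"
  proof -
    have "{i. i < n \<and> ty i = 0} = {..<m}" using mf unfolding ty_def m_def by auto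
    then show ?thesis by simp
  qed
  have c2: "card {i. i < n \<and> ty i = 2} = m"
  proof -
    have "{i. i < n \<and> ty i = 2} = {m..<2*m}" using mf unfolding ty_def m_def by auto
    then show ?thesis by simp
  qed
  have c1: "card {i. i < n \<and> ty i = 1} = n - 2 * m"
  proof -
    have "{i. i < n \<and> ty i = 1} = {2*m..<n}" using mf unfolding ty_def m_def by auto
    then show ?thesis by simp
  qed
  have "Wf \<eta> r z \<nu> m (n - 2 * m) m (x $ 2) \<le> (sgd_epoch n gg \<eta> p x) $ 2"
    using U.foldl_W[OF tyOK, of "x $ 2"] unfolding epoch_coord count_perm[OF p] c0 c1 c2 .
  moreover have "Wf \<eta> r z \<nu> m (n - 2 * m) m (l2v n L \<mu> \<nu> K) \<le> Wf \<eta> r z \<nu> m (n - 2 * m) m (x $ 2)"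
    using x by (rule U.W_mono)
  moreover have "l2v n L \<mu> \<nu> K \<le> Wf \<eta> r z \<nu> m (n - 2 * m) m (l2v n L \<mu> \<nu> K)"
  proof (rule W_ge[OF rpos])
    have "m \<ge> 1" "n - 2 * m \<ge> 1" "2 * real m \<le> real n" using mf unfolding m_def by auto
    from R2_cond[OF this \<mu> \<nu> Lb K1 Kpos lo[unfolded etalo_def] hi[unfolded eta2_def m_def[symmetric]]]
    show "(\<nu>/r) * ((1 - (1-\<eta>*r)^m * (1+\<eta>*r)^m) - (1 - (1-\<eta>*z)^(n - 2 * m)) * ((1+\<eta>*r)^m - (1-\<eta>*r)^m * (1+\<eta>*r)^m))
               \<ge> l2v n L \<mu> \<nu> K * (1 - (1-\<eta>*z)^(n - 2 * m) * ((1-\<eta>*r)^m * (1+\<eta>*r)^m))"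
      unfolding l2v_def etalo_def r_def z_def m_def by simp
  qed
  ultimately show ?thesis by linarith
qed

lemma R3_epoch:
  assumes p: "p permutes {0..<n}" and lo: "eta2 n L \<le> \<eta>" and hi: "\<eta> \<le> 2 / L"
    and x: "x $ 3 \<ge> l3v n L \<mu> \<nu>"
  shows "(sgd_epoch n gg \<eta> p x) $ 3 \<ge> l3v n L \<mu> \<nu>"
proof -
  define m where "m = mm n"
  define r where "r = L / 4"
  define z where "z = real n * ab3 n L \<mu> / real (n - 2)"
  define ty where "ty = (\<lambda>i::nat. if i = 2 * m then 0 else if i = Suc (2 * m) then 2 else (1::nat))"
  note mf = mm_facts[OF n]
  have rpos: "r > 0" unfolding r_def using Lpos by simp
  have eta0: "\<eta> > 0" using lo eta2pos by linarith
  have er: "\<eta> * r \<le> 1"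
  proof -
    have "\<eta> * r \<le> (2 / L) * r" using hi rpos by (intro mult_right_mono) auto
    then show ?thesis unfolding r_def using Lpos by (simp add: mult.commute)
  qed
  have zb: "0 \<le> z" "z \<le> r / 2" using z3_bounds unfolding z_def r_def by auto
  have ez0: "\<eta> * z \<ge> 0" using eta0 zb by simp
  have ez1: "\<eta> * z \<le> 1"
  proof -
    have "\<eta> * z \<le> \<eta> * r" using zb rpos eta0 by (intro mult_left_mono) auto
    then show ?thesis using er by linarith
  qed
  interpret U: uzd \<eta> r z \<nu> using eta0 \<nu> rpos er ez0 ez1 by unfold_locales auto
  have tyOK: "\<forall>i\<in>set (map p [0..<n]). (ty i = 0 \<and> Ac n L \<mu> i 3 = r \<and> Bc n \<nu> i 3 = - \<nu>) \<or> (ty i = 1 \<and> Ac n L \<mu> i 3 = z \<and> Bc n \<nu> i 3 = 0)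
                        \<or> (ty i = 2 \<and> Ac n L \<mu> i 3 = - r \<and> Bc n \<nu> i 3 = \<nu>)"
    unfolding ty_def Ac_def Bc_def z_def r_def m_def by auto
  have c0: "card {i. i < n \<and> ty i = 0} = 1"
  proof -
    have "{i. i < n \<and> ty i = 0} = {2 * m}" using mf unfolding ty_def m_def by auto
    then show ?thesis by simp
  qed
  have c2: "card {i. i < n \<and> ty i = 2} = 1"
  proof -
    have "{i. i < n \<and> ty i = 2} = {Suc (2 * m)}" using mf unfolding ty_def m_def by auto
    then show ?thesis by simp
  qed
  have c1: "card {i. i < n \<and> ty i = 1} = n - 2"
  proof -
    have "{i. i < n \<and> ty i = 1} = {..<n} - {2 * m, Suc (2 * m)}" using mf unfolding ty_def m_def by auto
    moreover have "card ({..<n} - {2 * m, Suc (2 * m)}) = n - 2"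
      using mf unfolding m_def by (subst card_Diff_subset) auto
    ultimately show ?thesis by simp
  qed
  have "Wf \<eta> r z \<nu> 1 (n - 2) 1 (x $ 3) \<le> (sgd_epoch n gg \<eta> p x) $ 3"
    using U.foldl_W[OF tyOK, of "x $ 3"] unfolding epoch_coord count_perm[OF p] c0 c1 c2 .
  moreover have "Wf \<eta> r z \<nu> 1 (n - 2) 1 (l3v n L \<mu> \<nu>) \<le> Wf \<eta> r z \<nu> 1 (n - 2) 1 (x $ 3)"
    using x by (rule U.W_mono)
  moreover have "l3v n L \<mu> \<nu> \<le> Wf \<eta> r z \<nu> 1 (n - 2) 1 (l3v n L \<mu> \<nu>)"
  proof (rule W_ge[OF rpos])
    have F3: "n \<ge> 3" "m \<ge> 1" "2 * real m \<le> real n" using mf unfolding m_def by auto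
    have h: "eta2 n L = 1 / (10 * real m * (L/4))" unfolding eta2_def m_def ..
    from R3_cond[OF F3 \<mu> \<nu> Lb h ab3_def lo hi]
    show "(\<nu>/r) * ((1 - (1-\<eta>*r)^1 * (1+\<eta>*r)^1) - (1 - (1-\<eta>*z)^(n - 2)) * ((1+\<eta>*r)^1 - (1-\<eta>*r)^1 * (1+\<eta>*r)^1))
               \<ge> l3v n L \<mu> \<nu> * (1 - (1-\<eta>*z)^(n - 2) * ((1-\<eta>*r)^1 * (1+\<eta>*r)^1))"
      unfolding l3v_def r_def z_def by simp
  qed
  ultimately show ?thesis by linarith
qed

lemma T_bound: "L^2 * \<nu>^2 / (\<mu>^3 * (real n)^2 * K^2) \<le> \<nu>^2 / (L * (real n)^3)"
proof -
  have pos: "\<mu>^3 * (real n)^2 * ((L/\<mu>)^3 * real n) > 0" using \<mu> n0 Lpos by simp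
  have p1: "\<mu>^3 * (real n)^2 > 0" using \<mu> n0 by simp
  have p2: "\<mu>^3 * (real n)^2 * K^2 > 0" using p1 Kpos by simp
  have "L^2 * \<nu>^2 / (\<mu>^3 * (real n)^2 * K^2) \<le> L^2 * \<nu>^2 / (\<mu>^3 * (real n)^2 * ((L/\<mu>)^3 * real n))"
  proof (rule divide_left_mono)
    show "\<mu>^3 * (real n)^2 * ((L/\<mu>)^3 * real n) \<le> \<mu>^3 * (real n)^2 * K^2"
      using K2sq p1 by (intro mult_left_mono) auto
    show "0 < \<mu>^3 * (real n)^2 * K^2 * (\<mu>^3 * (real n)^2 * ((L/\<mu>)^3 * real n))"
      using p2 pos by (rule mult_pos_pos)
  qed simp
  also have "\<dots> = \<nu>^2 / (L * (real n)^3)" using \<mu> n0 Lpos by (simp add: field_simps power2_eq_square power3_eq_cube)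
  finally show ?thesis .
qed

lemma N1: "(1/200000) * (L^2 * \<nu>^2 / (\<mu>^3 * (real n)^2 * K^2)) \<le> \<mu> * (l2v n L \<mu> \<nu> K / 2)^2 / 2"
proof -
  have m3: "real n \<le> 3 * real (mm n)" using mm_facts[OF n] by linarith
  have eq: "l2v n L \<mu> \<nu> K = \<nu> * L * real (mm n) / (40 * \<mu>^2 * (real n)^2 * K)"
    unfolding l2v_def etalo_def using \<mu> n0 Kpos by (simp add: field_simps power2_eq_square)
  have lb: "\<nu> * L / (120 * \<mu>^2 * real n * K) \<le> l2v n L \<mu> \<nu> K"
  proof -
    have "\<nu> * L / (120 * \<mu>^2 * real n * K) = \<nu> * L * real n / (40 * \<mu>^2 * (real n)^2 * K) / 3"
      using n0 by (simp add: field_simps power2_eq_square)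
    also have "\<dots> \<le> \<nu> * L * (3 * real (mm n)) / (40 * \<mu>^2 * (real n)^2 * K) / 3"
      using m3 \<nu> Lpos \<mu> n0 Kpos by (intro divide_right_mono mult_left_mono) auto
    also have "\<dots> = l2v n L \<mu> \<nu> K" unfolding eq by (simp add: mult_ac)
    finally show ?thesis .
  qed
  have lb0: "0 \<le> \<nu> * L / (120 * \<mu>^2 * real n * K)" using \<nu> Lpos \<mu> n0 Kpos by simp
  have "(\<nu> * L / (120 * \<mu>^2 * real n * K))^2 \<le> (l2v n L \<mu> \<nu> K)^2"
    using lb lb0 by (intro power_mono) auto
  then have "\<mu> * (\<nu> * L / (120 * \<mu>^2 * real n * K))^2 / 8 \<le> \<mu> * (l2v n L \<mu> \<nu> K)^2 / 8"
    using \<mu> by (intro divide_right_mono mult_left_mono) auto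
  moreover have "\<mu> * (\<nu> * L / (120 * \<mu>^2 * real n * K))^2 / 8 = (1/115200) * (L^2 * \<nu>^2 / (\<mu>^3 * (real n)^2 * K^2))"
    using \<mu> n0 Kpos by (simp add: field_simps power2_eq_square power3_eq_cube)
  moreover have "(1/200000) * (L^2 * \<nu>^2 / (\<mu>^3 * (real n)^2 * K^2)) \<le> (1/115200) * (L^2 * \<nu>^2 / (\<mu>^3 * (real n)^2 * K^2))"
    using \<mu> n0 Kpos \<nu> Lpos by (intro mult_right_mono) auto
  moreover have "\<mu> * (l2v n L \<mu> \<nu> K / 2)^2 / 2 = \<mu> * (l2v n L \<mu> \<nu> K)^2 / 8" by (simp add: power2_eq_square)
  ultimately show ?thesis by linarith
qed

lemma N3: "(1/200000) * (L^2 * \<nu>^2 / (\<mu>^3 * (real n)^2 * K^2)) \<le> ab3 n L \<mu> * (l3v n L \<mu> \<nu>)^2 / 2"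
proof -
  define m where "m = real (mm n)"
  define T where "T = L^2 * \<nu>^2 / (\<mu>^3 * (real n)^2 * K^2)"
  define a where "a = ab3 n L \<mu>"
  have M1: "m \<ge> 1" "2 * m \<le> real n" using mm_facts[OF n] unfolding m_def by auto
  have apos: "a > 0" unfolding a_def by (rule ab3pos)
  have T0: "T \<ge> 0"
  proof -
    have "\<mu>^3 * (real n)^2 * K^2 > 0" using \<mu> n0 Kpos by simp
    then show ?thesis unfolding T_def by simp
  qed
  have TB: "T \<le> \<nu>^2 / (L * (real n)^3)" unfolding T_def by (rule T_bound)
  have gap: "a * (l3v n L \<mu> \<nu>)^2 / 2 = \<nu>^2 / (12800 * m^2 * (real n)^2 * a)"
    unfolding l3v_def eta2_def a_def[symmetric] m_def[symmetric] using M1 Lpos n0 apos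
    by (simp add: field_simps power2_eq_square)
  have amax: "a \<le> \<mu> + L / (40 * m * real n)"
  proof -
    have "eta2 n L * (L/4)^2 / real n = L / (40 * m * real n)"
      unfolding eta2_def m_def[symmetric] using M1 Lpos n0 by (simp add: field_simps power2_eq_square)
    moreover have "L / (40 * m * real n) \<ge> 0" using M1 Lpos n0 by simp
    ultimately show ?thesis unfolding a_def ab3_def using \<mu> by (simp add: max_def)
  qed
  have k1: "12800 * m^2 * (real n)^2 * \<mu> * T \<le> 400 * \<nu>^2"
  proof -
    have "12800 * m^2 * (real n)^2 * \<mu> * T \<le> 12800 * ((real n)^2/4) * (real n)^2 * \<mu> * (\<nu>^2 / (L * (real n)^3))"
    proof (intro mult_mono)
      have "(2 * m)^2 \<le> (real n)^2" using M1 by (intro power_mono) auto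
      then show "m^2 \<le> (real n)^2 / 4" by (simp add: power_mult_distrib)
    qed (use TB T0 \<mu> M1 n0 in auto)
    also have "\<dots> = 3200 * (real n * \<mu> / L) * \<nu>^2" using n0 Lpos by (simp add: field_simps power2_eq_square power3_eq_cube)
    also have "\<dots> \<le> 3200 * (1/8) * \<nu>^2"
    proof -
      have "real n * \<mu> / L \<le> 1/8" using Lb Lpos by (simp add: pos_divide_le_eq)
      then show ?thesis by (intro mult_right_mono mult_left_mono) auto
    qed
    finally show ?thesis by simp
  qed
  have k2: "12800 * m^2 * (real n)^2 * (L / (40 * m * real n)) * T \<le> 2 * \<nu>^2"
  proof -
    have "12800 * m^2 * (real n)^2 * (L / (40 * m * real n)) = 320 * m * real n * L"
      using M1 n0 by (simp add: field_simps power2_eq_square)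
    then have "12800 * m^2 * (real n)^2 * (L / (40 * m * real n)) * T = 320 * m * real n * L * T" by simp
    also have "\<dots> \<le> 320 * (real n / 2) * real n * L * (\<nu>^2 / (L * (real n)^3))"
      using M1 TB T0 n0 Lpos by (intro mult_mono) auto
    also have "\<dots> = 160 * \<nu>^2 / real n" using n0 Lpos by (simp add: field_simps power2_eq_square power3_eq_cube)
    also have "\<dots> \<le> 2 * \<nu>^2" using n \<nu> by (simp add: pos_divide_le_eq)
    finally show ?thesis .
  qed
  have "12800 * m^2 * (real n)^2 * a * T \<le> 12800 * m^2 * (real n)^2 * (\<mu> + L / (40 * m * real n)) * T"
    using amax T0 M1 by (intro mult_right_mono mult_left_mono) auto
  also have "\<dots> = 12800 * m^2 * (real n)^2 * \<mu> * T + 12800 * m^2 * (real n)^2 * (L / (40 * m * real n)) * T"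
    by (simp add: algebra_simps)
  finally have "12800 * m^2 * (real n)^2 * a * T \<le> 402 * \<nu>^2" using k1 k2 by linarith
  moreover have "(1/200000) * T * (12800 * m^2 * (real n)^2 * a) = (12800 * m^2 * (real n)^2 * a * T) / 200000"
    by simp
  moreover have "0 \<le> \<nu>^2" by simp
  ultimately have "(1/200000) * T * (12800 * m^2 * (real n)^2 * a) \<le> \<nu>^2" by linarith
  moreover have "12800 * m^2 * (real n)^2 * a > 0" using M1 n0 apos by simp
  ultimately have "(1/200000) * T \<le> \<nu>^2 / (12800 * m^2 * (real n)^2 * a)" by (simp add: pos_le_divide_eq)
  then have "(1/200000) * T \<le> a * (l3v n L \<mu> \<nu>)^2 / 2" unfolding gap .
  then show ?thesis unfolding T_def a_def .
qed

lemma l2pos: "l2v n L \<mu> \<nu> K > 0"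
  unfolding l2v_def etalo_def using \<nu> m1 \<mu> n0 Kpos Lpos by simp
lemma l3pos: "l3v n L \<mu> \<nu> > 0"
  unfolding l3v_def using \<nu> eta2pos Lpos n0 ab3pos by simp

lemma gap_lower:
  "avg_fun n (qf (Ac n L \<mu>) (Bc n \<nu>)) x - (INF y. avg_fun n (qf (Ac n L \<mu>) (Bc n \<nu>)) y)
     \<ge> abar n (Ac n L \<mu>) j / 2 * (x $ j)^2"
proof -
  have AF: "avg_fun n (qf (Ac n L \<mu>) (Bc n \<nu>)) y = (\<Sum>j\<in>UNIV. abar n (Ac n L \<mu>) j / 2 * (y$j)^2)" for y
    using avg_fun_qf[of n "Bc n \<nu>" "Ac n L \<mu>" y] n0 Bc_sum[OF n] by simp
  have t0: "0 \<le> abar n (Ac n L \<mu>) j / 2 * (y$j)^2" for j y using abar_mu[of j] \<mu> by simp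
  have nonneg: "avg_fun n (qf (Ac n L \<mu>) (Bc n \<nu>)) y \<ge> 0" for y
    unfolding AF by (intro sum_nonneg) (use t0 in auto)
  have zero: "avg_fun n (qf (Ac n L \<mu>) (Bc n \<nu>)) 0 = 0" unfolding AF by simp
  have INF0: "(INF y. avg_fun n (qf (Ac n L \<mu>) (Bc n \<nu>)) y) = 0"
  proof (rule antisym)
    have "bdd_below (range (avg_fun n (qf (Ac n L \<mu>) (Bc n \<nu>))))"
      by (rule bdd_belowI2[of _ 0]) (simp add: nonneg)
    then show "(INF y. avg_fun n (qf (Ac n L \<mu>) (Bc n \<nu>)) y) \<le> 0"
      using zero by (metis cINF_lower UNIV_I)
    show "0 \<le> (INF y. avg_fun n (qf (Ac n L \<mu>) (Bc n \<nu>)) y)"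
      by (rule cINF_greatest) (auto simp: nonneg)
  qed
  have "abar n (Ac n L \<mu>) j / 2 * (x $ j)^2 \<le> (\<Sum>j\<in>UNIV. abar n (Ac n L \<mu>) j / 2 * (x$j)^2)"
    by (rule member_le_sum) (use t0 in auto)
  then show ?thesis unfolding INF0 unfolding AF by simp
qed

definition x0c :: "real^4" where "x0c = (\<chi> j. if j = 3 then l3v n L \<mu> \<nu> else l2v n L \<mu> \<nu> K)"

lemma coord_lower:
  fixes Kn :: nat and \<sigma> :: "nat \<Rightarrow> nat \<Rightarrow> nat" and \<eta> :: real
  assumes KK: "K = real Kn" and perms: "\<forall>k\<in>{1..Kn}. \<sigma> k permutes {0..<n}" and eta: "\<eta> > 0"
  shows "\<exists>j l. l > 0 \<and> (\<forall>k \<le> Kn. (sgd_start n gg \<eta> \<sigma> x0c k) $ j \<ge> l)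
           \<and> (1/200000) * (L^2 * \<nu>^2 / (\<mu>^3 * (real n)^2 * K^2)) \<le> abar n (Ac n L \<mu>) j * l^2 / 2"
proof -
  have P: "\<sigma> (Suc k) permutes {0..<n}" if "Suc k \<le> Kn" for k using perms that by auto
  have x01: "x0c $ 1 = l2v n L \<mu> \<nu> K" "x0c $ 2 = l2v n L \<mu> \<nu> K" "x0c $ 3 = l3v n L \<mu> \<nu>" "x0c $ 4 = l2v n L \<mu> \<nu> K"
    unfolding x0c_def by simp_all
  have gap1: "(1/200000) * (L^2 * \<nu>^2 / (\<mu>^3 * (real n)^2 * K^2)) \<le> abar n (Ac n L \<mu>) j * (l2v n L \<mu> \<nu> K / 2)^2 / 2" for j
  proof -
    have "\<mu> * (l2v n L \<mu> \<nu> K / 2)^2 / 2 \<le> abar n (Ac n L \<mu>) j * (l2v n L \<mu> \<nu> K / 2)^2 / 2"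
      using abar_mu[of j] by (intro divide_right_mono mult_right_mono) auto
    then show ?thesis using N1 by linarith
  qed
  have l2h: "l2v n L \<mu> \<nu> K / 2 > 0" using l2pos by simp
  consider (A) "\<eta> \<le> etalo n \<mu> K" | (B) "etalo n \<mu> K < \<eta>" "\<eta> \<le> eta2 n L"
    | (C) "eta2 n L < \<eta>" "\<eta> \<le> 2 / L" | (D) "2 / L < \<eta>" by linarith
  then show ?thesis
  proof cases
    case A
    have lin: "k \<le> Kn \<Longrightarrow> (sgd_start n gg \<eta> \<sigma> x0c k) $ 1 = ((1 - \<eta> * \<mu>)^n)^k * x0c $ 1" for k
      by (rule start_lin[where K=Kn]) (use R1_epoch P in blast)
    have "(sgd_start n gg \<eta> \<sigma> x0c k) $ 1 \<ge> l2v n L \<mu> \<nu> K / 2" if k: "k \<le> Kn" for k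
    proof -
      have em: "\<eta> * \<mu> \<le> etalo n \<mu> K * \<mu>" using A \<mu> by (intro mult_right_mono) auto
      have emu: "etalo n \<mu> K * \<mu> * (real n * K) = 1/2" unfolding etalo_def using \<mu> n0 Kpos by simp
      have "real (n * k) * (\<eta> * \<mu>) \<le> (real n * K) * (etalo n \<mu> K * \<mu>)"
      proof (rule mult_mono)
        show "real (n * k) \<le> real n * K" using k KK n0 by (simp add: mult_left_mono)
      qed (use em \<mu> eta n0 Kpos in auto)
      then have b: "real (n * k) * (\<eta> * \<mu>) \<le> 1/2" using emu by (simp add: mult.commute)
      have e1: "\<eta> * \<mu> \<le> 1"
      proof -
        have "1 * (\<eta> * \<mu>) \<le> (real n * K) * (\<eta> * \<mu>)"
        proof (rule mult_right_mono)
          have "1 \<le> real n" using n by simp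
          moreover have "1 \<le> K"
          proof -
            have "Kn \<noteq> 0" using Kpos KK by auto
            then show ?thesis using KK by simp
          qed
          ultimately have "1 * 1 \<le> real n * K" by (intro mult_mono) auto
          then show "1 \<le> real n * K" by simp
        qed (use eta \<mu> in simp)
        also have "\<dots> \<le> (real n * K) * (etalo n \<mu> K * \<mu>)" using em n0 Kpos by (intro mult_left_mono) auto
        finally show ?thesis using emu by (simp add: mult.commute)
      qed
      have "1 + real (n * k) * (- (\<eta> * \<mu>)) \<le> (1 + - (\<eta> * \<mu>))^(n * k)"
        using e1 by (intro Bernoulli_inequality) simp
      then have q: "((1 - \<eta> * \<mu>)^n)^k \<ge> 1/2" using b by (simp add: power_mult)
      have "(sgd_start n gg \<eta> \<sigma> x0c k) $ 1 = ((1 - \<eta> * \<mu>)^n)^k * l2v n L \<mu> \<nu> K" using lin[OF k] x01 by simp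
      also have "\<dots> \<ge> (1/2) * l2v n L \<mu> \<nu> K" using q l2pos by (intro mult_right_mono) auto
      finally show ?thesis by simp
    qed
    then show ?thesis using gap1 l2h by blast
  next
    case B
    have "k \<le> Kn \<Longrightarrow> (sgd_start n gg \<eta> \<sigma> x0c k) $ 2 \<ge> l2v n L \<mu> \<nu> K" for k
      by (rule start_inv[where K=Kn]) (use x01 R2_epoch P B in auto)
    then have "\<forall>k \<le> Kn. (sgd_start n gg \<eta> \<sigma> x0c k) $ 2 \<ge> l2v n L \<mu> \<nu> K / 2" using l2pos by fastforce
    then show ?thesis using gap1 l2h by blast
  next
    case C
    have "k \<le> Kn \<Longrightarrow> (sgd_start n gg \<eta> \<sigma> x0c k) $ 3 \<ge> l3v n L \<mu> \<nu>" for k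
      by (rule start_inv[where K=Kn]) (use x01 R3_epoch P C in auto)
    moreover have "abar n (Ac n L \<mu>) 3 = ab3 n L \<mu>" unfolding abar_Ac[OF n] by simp
    ultimately show ?thesis using N3 l3pos by (intro exI[of _ 3] exI[of _ "l3v n L \<mu> \<nu>"]) auto
  next
    case D
    have lin: "k \<le> Kn \<Longrightarrow> (sgd_start n gg \<eta> \<sigma> x0c k) $ 4 = ((1 - \<eta> * L)^(2 * MM n))^k * x0c $ 4" for k
      by (rule start_lin[where K=Kn]) (use R4_epoch P in blast)
    have q1: "(1 - \<eta> * L)^(2 * MM n) \<ge> 1"
    proof -
      have "\<eta> * L > 2" using D Lpos by (simp add: field_simps)
      then have t: "\<eta> * L - 1 \<ge> 1" by simp
      have "1 * 1 \<le> (\<eta> * L - 1) * (\<eta> * L - 1)" using t by (intro mult_mono) auto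
      moreover have "(1 - \<eta> * L)^2 = (\<eta> * L - 1) * (\<eta> * L - 1)" by (simp add: power2_eq_square algebra_simps)
      ultimately have "1 \<le> (1 - \<eta> * L)^2" by simp
      then have "1 \<le> ((1 - \<eta> * L)^2)^(MM n)" by (rule one_le_power)
      then show ?thesis by (simp add: power_mult)
    qed
    have "(sgd_start n gg \<eta> \<sigma> x0c k) $ 4 \<ge> l2v n L \<mu> \<nu> K / 2" if k: "k \<le> Kn" for k
    proof -
      have "1 \<le> ((1 - \<eta> * L)^(2 * MM n))^k" using q1 by (rule one_le_power)
      then have "1 * l2v n L \<mu> \<nu> K \<le> ((1 - \<eta> * L)^(2 * MM n))^k * l2v n L \<mu> \<nu> K"
        using l2pos by (intro mult_right_mono) auto
      then show ?thesis using lin[OF k] x01 l2pos by simp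
    qed
    then show ?thesis using gap1 l2h by blast
  qed
qed

end

theorem theorem9:
  shows "\<exists>c>0. \<forall>(n::nat) (L::real) (\<mu>::real) (\<nu>::real) (K::nat).
    n \<ge> 104 \<and> L > 0 \<and> \<mu> > 0 \<and> \<nu> > 0 \<and> L / \<mu> \<ge> 8 * real n \<and>
    real K \<ge> max ((L / \<mu>)\<^sup>2 / real n) ((L / \<mu>) powr (3/2) * sqrt (real n)) \<longrightarrow>
    (\<exists>(f :: nat \<Rightarrow> real^4 \<Rightarrow> real) (g :: nat \<Rightarrow> real^4 \<Rightarrow> real^4) (x0 :: real^4).
       in_PL_class n f g L \<mu> (L / \<mu>) \<nu> \<and>
       (\<forall>(\<sigma> :: nat \<Rightarrow> nat \<Rightarrow> nat) (\<eta>::real) (\<alpha> :: nat \<Rightarrow> real).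
          (\<forall>k\<in>{1..K}. \<sigma> k permutes {0..<n}) \<and> \<eta> > 0 \<and>
          (\<forall>k\<in>{1..K+1}. \<alpha> k \<ge> 0) \<and> (\<exists>k\<in>{1..K+1}. \<alpha> k \<noteq> 0) \<longrightarrow>
          avg_fun n f ((1 / (\<Sum>k=1..K+1. \<alpha> k)) *\<^sub>R (\<Sum>k=1..K+1. \<alpha> k *\<^sub>R sgd_start n g \<eta> \<sigma> x0 (k - 1)))
            - (INF y. avg_fun n f y)
          \<ge> c * (L\<^sup>2 * \<nu>\<^sup>2 / (\<mu>^3 * (real n)\<^sup>2 * (real K)\<^sup>2))))"
proof (intro exI[of _ "1/200000::real"] conjI allI impI)
  show "(0::real) < 1/200000" by simp
  fix n :: nat and L \<mu> \<nu> :: real and K :: nat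
  assume H: "n \<ge> 104 \<and> L > 0 \<and> \<mu> > 0 \<and> \<nu> > 0 \<and> L / \<mu> \<ge> 8 * real n \<and>
    real K \<ge> max ((L / \<mu>)\<^sup>2 / real n) ((L / \<mu>) powr (3/2) * sqrt (real n))"
  interpret P: params n L \<mu> \<nu> "real K" using H by unfold_locales auto
  show "\<exists>(f :: nat \<Rightarrow> real^4 \<Rightarrow> real) (g :: nat \<Rightarrow> real^4 \<Rightarrow> real^4) (x0 :: real^4).
       in_PL_class n f g L \<mu> (L / \<mu>) \<nu> \<and>
       (\<forall>(\<sigma> :: nat \<Rightarrow> nat \<Rightarrow> nat) (\<eta>::real) (\<alpha> :: nat \<Rightarrow> real).
          (\<forall>k\<in>{1..K}. \<sigma> k permutes {0..<n}) \<and> \<eta> > 0 \<and>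
          (\<forall>k\<in>{1..K+1}. \<alpha> k \<ge> 0) \<and> (\<exists>k\<in>{1..K+1}. \<alpha> k \<noteq> 0) \<longrightarrow>
          avg_fun n f ((1 / (\<Sum>k=1..K+1. \<alpha> k)) *\<^sub>R (\<Sum>k=1..K+1. \<alpha> k *\<^sub>R sgd_start n g \<eta> \<sigma> x0 (k - 1)))
            - (INF y. avg_fun n f y)
          \<ge> 1/200000 * (L\<^sup>2 * \<nu>\<^sup>2 / (\<mu>^3 * (real n)\<^sup>2 * (real K)\<^sup>2)))"
  proof (intro exI[of _ "qf (Ac n L \<mu>) (Bc n \<nu>)"] exI[of _ "qg (Ac n L \<mu>) (Bc n \<nu>)"] exI[of _ "P.x0c"]
      conjI allI impI)
    show "in_PL_class n (qf (Ac n L \<mu>) (Bc n \<nu>)) (qg (Ac n L \<mu>) (Bc n \<nu>)) L \<mu> (L / \<mu>) \<nu>" by (rule P.PL)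
    fix \<sigma> :: "nat \<Rightarrow> nat \<Rightarrow> nat" and \<eta> :: real and \<alpha> :: "nat \<Rightarrow> real"
    assume C: "(\<forall>k\<in>{1..K}. \<sigma> k permutes {0..<n}) \<and> \<eta> > 0 \<and>
          (\<forall>k\<in>{1..K+1}. \<alpha> k \<ge> 0) \<and> (\<exists>k\<in>{1..K+1}. \<alpha> k \<noteq> 0)"
    let ?xs = "sgd_start n (qg (Ac n L \<mu>) (Bc n \<nu>)) \<eta> \<sigma> P.x0c"
    obtain j l where jl: "l > 0" "\<forall>k \<le> K. ?xs k $ j \<ge> l"
      and gj: "(1/200000) * (L^2 * \<nu>^2 / (\<mu>^3 * (real n)^2 * (real K)^2)) \<le> abar n (Ac n L \<mu>) j * l^2 / 2"
      using P.coord_lower[of K \<sigma> \<eta>] C by auto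
    define S where "S = (\<Sum>k=1..K+1. \<alpha> k)"
    define xh where "xh = (1 / S) *\<^sub>R (\<Sum>k=1..K+1. \<alpha> k *\<^sub>R ?xs (k - 1))"
    have a0: "\<forall>k\<in>{1..K+1}. \<alpha> k \<ge> 0" using C by blast
    obtain k0 where k0: "k0 \<in> {1..K+1}" "\<alpha> k0 \<noteq> 0" using C by blast
    have Spos: "S > 0"
    proof -
      have "\<alpha> k0 \<le> S" unfolding S_def by (rule member_le_sum) (use k0 a0 in auto)
      moreover have "\<alpha> k0 \<ge> 0" using k0 a0 by blast
      then have "\<alpha> k0 > 0" using k0(2) by linarith
      ultimately show ?thesis by linarith
    qed
    have "(\<Sum>k=1..K+1. \<alpha> k * l) \<le> (\<Sum>k=1..K+1. \<alpha> k * (?xs (k - 1) $ j))"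
    proof (rule sum_mono)
      fix k assume k: "k \<in> {1..K+1}"
      then have "k - 1 \<le> K" by auto
      then show "\<alpha> k * l \<le> \<alpha> k * (?xs (k - 1) $ j)" using jl a0 k by (intro mult_left_mono) auto
    qed
    moreover have "S * l = (\<Sum>k=1..K+1. \<alpha> k * l)" unfolding S_def by (rule sum_distrib_right)
    ultimately have sl: "S * l \<le> (\<Sum>k=1..K+1. \<alpha> k * (?xs (k - 1) $ j))" by simp
    have xhj: "xh $ j = (\<Sum>k=1..K+1. \<alpha> k * (?xs (k - 1) $ j)) / S" unfolding xh_def by simp
    have xl: "xh $ j \<ge> l" unfolding xhj using sl Spos by (simp add: pos_le_divide_eq mult.commute)
    have "l^2 \<le> (xh $ j)^2" using xl jl by (intro power_mono) auto
    then have "abar n (Ac n L \<mu>) j / 2 * l^2 \<le> abar n (Ac n L \<mu>) j / 2 * (xh $ j)^2"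
      using P.abar_mu[of j] H by (intro mult_left_mono) auto
    moreover have "abar n (Ac n L \<mu>) j / 2 * (xh $ j)^2 \<le> avg_fun n (qf (Ac n L \<mu>) (Bc n \<nu>)) xh - (INF y. avg_fun n (qf (Ac n L \<mu>) (Bc n \<nu>)) y)"
      by (rule P.gap_lower)
    moreover have "abar n (Ac n L \<mu>) j * l^2 / 2 = abar n (Ac n L \<mu>) j / 2 * l^2" by simp
    ultimately have fin: "1/200000 * (L\<^sup>2 * \<nu>\<^sup>2 / (\<mu>^3 * (real n)\<^sup>2 * (real K)\<^sup>2))
        \<le> avg_fun n (qf (Ac n L \<mu>) (Bc n \<nu>)) xh - (INF y. avg_fun n (qf (Ac n L \<mu>) (Bc n \<nu>)) y)"
      using gj by linarith
    then show "avg_fun n (qf (Ac n L \<mu>) (Bc n \<nu>)) ((1 / (\<Sum>k=1..K+1. \<alpha> k)) *\<^sub>R (\<Sum>k=1..K+1. \<alpha> k *\<^sub>R ?xs (k - 1)))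
            - (INF y. avg_fun n (qf (Ac n L \<mu>) (Bc n \<nu>)) y)
          \<ge> 1/200000 * (L\<^sup>2 * \<nu>\<^sup>2 / (\<mu>^3 * (real n)\<^sup>2 * (real K)\<^sup>2))"
      unfolding xh_def S_def .
  qed
qed

end
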